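(* Let $r,s\ge0$, $m=r+(n-1)s$, and let $\iota:A_q(n;r,s)\to A_q(n,m)$ be the map described in the context. For every $R$-linear map $\tilde\varphi:A_q(n,m)\to R$ one has $\pi(\Theta(\tilde\varphi))=\Theta'(\tilde\varphi\circ\iota)$; that is, under the identifications $\Theta:A_q(n,m)^*\cong S_q(n,m)$ and $\Theta':A_q(n;r,s)^*\cong S_q(n;r,s)$, $\iota^*=\pi$.
   Context: $R$ commutative ring with $1$, $q\in R$ invertible, $n\ge1$. $A_q(n)$: $R$-algebra on $x_{ij}$ ($1\le i,j\le n$) with relations $x_{ik}x_{jk}=qx_{jk}x_{ik}$ ($i<j$), $x_{ki}x_{kj}=qx_{kj}x_{ki}$ ($i<j$), $x_{ij}x_{kl}=x_{kl}x_{ij}$ ($i<k,j>l$), $x_{ij}x_{kl}=x_{kl}x_{ij}+(q-q^{-1})x_{il}x_{kj}$ ($i<k,j<l$); $A_q(n,m)$ its degree-$m$ part. For $i_1<\dots<i_k$: $(i_1\ldots i_k|j_1\ldots j_k)=\sum_{w\in\mathfrak S_k}(-q)^{l(w)}x_{i_{w1}j_1}\cdots x_{i_{wk}j_k}$. $A_q(n;r,s)=(F(n,r)\otimes F_*(n,s))/Y$ is the bidegree-$(r,s)$ part of the quotient of the tensor product of the free $R$-algebras on $x_{ij}$ and on $x^*_{ij}$ (product: concatenate $x$-parts and $x^*$-parts separately) by the two-sided ideal generated by: the four relations of $A_q(n)$ in the $x_{ij}$; the same four relations in the $x^*_{ij}$ with $q$ replaced by $q^{-1}$; $\sum_kx_{ik}x^*_{jk}$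 and $\sum_kq^{2k}x_{ki}x^*_{kj}$ ($i\ne j$); and $\sum_kq^{2k-2i}x_{ki}x^*_{ki}-\sum_kx_{jk}x^*_{jk}$. $\iota:A_q(n;r,s)\to A_q(n,m)$ is the well-defined $R$-linear map with $\iota(x_{i_1j_1}\cdots x_{i_rj_r}x^*_{k_1l_1}\cdots x^*_{k_sl_s})=x_{i_1j_1}\cdots x_{i_rj_r}\iota(x^*_{k_1l_1})\cdots\iota(x^*_{k_sl_s})$, $\iota(x^*_{ij})=(-q)^{j-i}(1\ldots\hat i\ldots n|1\ldots\hat j\ldots n)$. $V=R^n$ (basis $v_1,\dots,v_n$) is the natural module of the $R$-form $\mathbf U$ of $U_q(\mathfrak{gl}_n)$ (Lusztig divided-power form, base-changed to $R$), with subalgebra $\mathbf U'$ generated by the $K_i^{\pm1}$ and divided powers $e_i^{(l)},f_i^{(l)}$; $V^*$ has dual basis $v_i^*$. For multi-indices, $v_{\mathbf i}=v_{i_1}\otimes\cdots$, $v_{\mathbf i|\mathbf j}=v_{i_1}\otimes\cdots\otimes v_{i_r}\otimes v^*_{j_1}\otimes\cdots\otimes v^*_{j_s}$. $S_q(n,m)$ is the image of $\mathbf U$ (equivalently of $\mathbf U'$) in $\mathrm{End}_R(V^{\otimes m})$, and $S_q(n;r,s)$ is the algebra of endomorphisms of $V^{\otimes r}\otimes{V^*}^{\otimes s}$ commuting with the quantized walled Brauer algebra $\mathfrak B^n_{r,s}(q)$. $\kappa:V^*\to V^{\otimes n-1}$, $v_i^*\mapsto(-q)^i\sum_{w\in\mathfrak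 S_{n-1}}(-q)^{l(w)}v_{(1\ldots\hat i\ldots n).w}$ (place permutation) is a $\mathbf U'$-monomorphism; let $\kappa$ also denote $\mathrm{id}^{\otimes r}\otimes\kappa^{\otimes s}:V^{\otimes r}\otimes{V^*}^{\otimes s}\to V^{\otimes m}$, with image $T^{r,s}$. Every $\varphi\in S_q(n,m)$ maps $T^{r,s}$ into itself, and $\pi:S_q(n,m)\to S_q(n;r,s)$ is $\pi(\varphi)=\kappa^{-1}\circ\varphi|_{T^{r,s}}\circ\kappa$. For $\mathbf i,\mathbf j\in I(n,m)$ let $x_{\mathbf i\mathbf j}=x_{i_1j_1}\cdots x_{i_mj_m}\in A_q(n,m)$ and $E_{\mathbf i\mathbf j}$ the matrix unit $v_{\mathbf j}\mapsto v_{\mathbf i}$; for $\mathbf i,\mathbf k\in I(n,r)$, $\mathbf j,\mathbf l\in I(n,s)$ let $x_{\mathbf i|\mathbf j\,\mathbf k|\mathbf l}=x_{i_1k_1}\cdots x_{i_rk_r}x^*_{j_1l_1}\cdots x^*_{j_sl_s}\in A_q(n;r,s)$ and $E_{\mathbf i|\mathbf j\,\mathbf k|\mathbf l}$ the matrix unit $v_{\mathbf k|\mathbf l}\mapsto v_{\mathbf i|\mathbf j}$. The identifications are $\Theta(\tilde\varphi)=\sum_{\mathbf i,\mathbf j}\tilde\varphi(x_{\mathbf i\mathbf j})E_{\mathbf i\mathbf j}$ and $\Theta'(\tilde\psi)=\sum\tilde\psi(x_{\mathbf i|\mathbf j\,\mathbf k|\mathbf l})E_{\mathbf i|\mathbf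 j\,\mathbf k|\mathbf l}$, which are bijections $A_q(n,m)^*\to S_q(n,m)$ and $A_q(n;r,s)^*\to S_q(n;r,s)$. *)

theory Defs
  imports Main "HOL-Combinatorics.Multiset_Permutations"
begin

definition idx :: "nat \<Rightarrow> nat \<Rightarrow> nat list set" where
  "idx n m = {xs. length xs = m \<and> set xs \<subseteq> {1..n}}"

definition gens :: "nat \<Rightarrow> (nat \<times> nat) set" where
  "gens n = {1..n} \<times> {1..n}"

text \<open>Number of inversions of a list; for a rearrangement p = (i_{w1},...,i_{wk}) of an
  increasing list (i_1,...,i_k) this is the length l(w).\<close>
definition ninv :: "nat list \<Rightarrow> nat" where
  "ninv xs = card {(a, b). a < b \<and> b < length xs \<and> xs ! a > xs ! b}"

definition omit :: "nat \<Rightarrow> nat \<Rightarrow> nat list" where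
  "omit n a = filter (\<lambda>x. x \<noteq> a) [1..<n+1]"

text \<open>Elements of a free R-module on a set of words, written as formal linear
  combinations (lists of coefficient/word pairs).\<close>
type_synonym ('a, 'b) combo = "('a \<times> 'b list) list"

definition cmul :: "('a::comm_ring_1, 'b) combo \<Rightarrow> ('a, 'b) combo \<Rightarrow> ('a, 'b) combo" where
  "cmul c d = [(fst x * fst y, snd x @ snd y). x \<leftarrow> c, y \<leftarrow> d]"

definition cone :: "('a::comm_ring_1, 'b) combo" where
  "cone = [(1, [])]"

definition cscale :: "'a::comm_ring_1 \<Rightarrow> ('a, 'b) combo \<Rightarrow> ('a, 'b) combo" where
  "cscale a c = map (\<lambda>x. (a * fst x, snd x)) c"

definition ev :: "('b list \<Rightarrow> 'a) \<Rightarrow> ('a::comm_ring_1, 'b) combo \<Rightarrow> 'a" where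
  "ev f c = (\<Sum>x\<leftarrow>c. fst x * f (snd x))"

definition cvec :: "('a::comm_ring_1, 'b) combo \<Rightarrow> 'b list \<Rightarrow> 'a" where
  "cvec c w = (\<Sum>x\<leftarrow>c. if snd x = w then fst x else 0)"

text \<open>Defining quadratic relations of A_q(n) (as elements of the free algebra on x_ij);
  qi is the inverse of q.\<close>
definition Aq_rels :: "'a::comm_ring_1 \<Rightarrow> 'a \<Rightarrow> nat \<Rightarrow> ('a, nat \<times> nat) combo set" where
  "Aq_rels q qi n =
     {[(1, [(i,k),(j,k)]), (-q, [(j,k),(i,k)])] | i j k.
         i < j \<and> i \<in> {1..n} \<and> j \<in> {1..n} \<and> k \<in> {1..n}}
   \<union> {[(1, [(k,i),(k,j)]), (-q, [(k,j),(k,i)])] | i j k.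
         i < j \<and> i \<in> {1..n} \<and> j \<in> {1..n} \<and> k \<in> {1..n}}
   \<union> {[(1, [(i,j),(k,l)]), (-1, [(k,l),(i,j)])] | i j k l.
         i < k \<and> j > l \<and> i \<in> {1..n} \<and> j \<in> {1..n} \<and> k \<in> {1..n} \<and> l \<in> {1..n}}
   \<union> {[(1, [(i,j),(k,l)]), (-1, [(k,l),(i,j)]), (-(q - qi), [(i,l),(k,j)])] | i j k l.
         i < k \<and> j < l \<and> i \<in> {1..n} \<and> j \<in> {1..n} \<and> k \<in> {1..n} \<and> l \<in> {1..n}}"

text \<open>R-linear maps A_q(n,m) \<rightarrow> R, viewed as functions on degree-m monomials (words in the
  generators x_ij) that vanish on the degree-m part of the two-sided ideal generated by
  the (homogeneous quadratic) relations, i.e. on all u * rho * v with rho a relation.\<close>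
definition Aq_dual :: "'a::comm_ring_1 \<Rightarrow> 'a \<Rightarrow> nat \<Rightarrow> nat \<Rightarrow> ((nat \<times> nat) list \<Rightarrow> 'a) \<Rightarrow> bool" where
  "Aq_dual q qi n m f \<longleftrightarrow>
     (\<forall>\<rho>\<in>Aq_rels q qi n. \<forall>u v. set u \<subseteq> gens n \<and> set v \<subseteq> gens n \<and>
        length u + 2 + length v = m \<longrightarrow> ev f (cmul (cmul [(1, u)] \<rho>) [(1, v)]) = 0)"

text \<open>Theta: the matrix sum_{i,j} f(x_ij) E_ij, as a function of row index i and column index j.\<close>
definition Theta :: "((nat \<times> nat) list \<Rightarrow> 'a) \<Rightarrow> nat list \<Rightarrow> nat list \<Rightarrow> 'a" where
  "Theta f i j = f (zip i j)"

text \<open>Quantum minor (I|J) = sum_w (-q)^l(w) x_{I_w1 J_1} ... x_{I_wk J_k}, for I increasing.\<close>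
definition qminor :: "'a::comm_ring_1 \<Rightarrow> nat list \<Rightarrow> nat list \<Rightarrow> ('a, nat \<times> nat) combo" where
  "qminor q I J = [((-q) ^ ninv p, zip p J). p \<leftarrow> permutations_of_set_list I]"

text \<open>iota(x*_ab) = (-q)^(b-a) (1..hat a..n | 1..hat b..n); (-q)^(b-a) = (-q)^b (-qi)^a.\<close>
definition iota_star :: "'a::comm_ring_1 \<Rightarrow> 'a \<Rightarrow> nat \<Rightarrow> nat \<Rightarrow> nat \<Rightarrow> ('a, nat \<times> nat) combo" where
  "iota_star q qi n a b = cscale ((-q) ^ b * (-qi) ^ a) (qminor q (omit n a) (omit n b))"

text \<open>iota applied to the monomial x_{i|j k|l} = x_{i1k1}..x_{irkr} x*_{j1l1}..x*_{jsls}.\<close>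
definition iota_mon :: "'a::comm_ring_1 \<Rightarrow> 'a \<Rightarrow> nat \<Rightarrow> nat list \<Rightarrow> nat list \<Rightarrow> nat list \<Rightarrow> nat list
    \<Rightarrow> ('a, nat \<times> nat) combo" where
  "iota_mon q qi n i j k l =
     cmul [(1, zip i k)] (foldr cmul (map2 (iota_star q qi n) j l) cone)"

text \<open>kappa(v*_a) = (-q)^a sum_w (-q)^l(w) v_{(1..hat a..n).w}, as a combination of basis words.\<close>
definition kappa1 :: "'a::comm_ring_1 \<Rightarrow> nat \<Rightarrow> nat \<Rightarrow> ('a, nat) combo" where
  "kappa1 q n a = [((-q) ^ a * (-q) ^ ninv p, p). p \<leftarrow> permutations_of_set_list (omit n a)]"

text \<open>Matrix of kappa = id^{\<otimes> r} \<otimes> kappa^{\<otimes> s}: entry at row w (a basis vector v_w of V^{\<otimes> m})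
  and column (k,l) (the basis vector v_{k|l}).\<close>
definition kappa_mat :: "'a::comm_ring_1 \<Rightarrow> nat \<Rightarrow> nat list \<Rightarrow> nat list \<times> nat list \<Rightarrow> 'a" where
  "kappa_mat q n w kl =
     cvec (cmul [(1, fst kl)] (foldr cmul (map (kappa1 q n) (snd kl)) cone)) w"

text \<open>Basis index set of V^{\<otimes> r} \<otimes> V*^{\<otimes> s}.\<close>
definition idx2 :: "nat \<Rightarrow> nat \<Rightarrow> nat \<Rightarrow> (nat list \<times> nat list) set" where
  "idx2 n r s = idx n r \<times> idx n s"

text \<open>pi(M) = kappa^{-1} o M|_T o kappa, as the (unique) matrix N on V^{\<otimes> r} \<otimes> V*^{\<otimes> s}
  with kappa o N = M o kappa (kappa is injective).\<close>
definition pi_map :: "'a::comm_ring_1 \<Rightarrow> nat \<Rightarrow> nat \<Rightarrow> nat \<Rightarrow> (nat list \<Rightarrow> nat list \<Rightarrow> 'a)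
    \<Rightarrow> (nat list \<times> nat list \<Rightarrow> nat list \<times> nat list \<Rightarrow> 'a)" where
  "pi_map q n r s M = (THE N.
     (\<forall>x y. N x y \<noteq> 0 \<longrightarrow> x \<in> idx2 n r s \<and> y \<in> idx2 n r s) \<and>
     (\<forall>w\<in>idx n (r + (n - 1) * s). \<forall>y\<in>idx2 n r s.
        (\<Sum>x\<in>idx2 n r s. kappa_mat q n w x * N x y) =
        (\<Sum>w'\<in>idx n (r + (n - 1) * s). M w w' * kappa_mat q n w' y)))"

text \<open>Theta': the matrix sum psi(x_{i|j k|l}) E_{i|j k|l}; psi is given by its values on monomials.\<close>
definition Theta' :: "nat \<Rightarrow> nat \<Rightarrow> nat \<Rightarrow> (nat list \<Rightarrow> nat list \<Rightarrow> nat list \<Rightarrow> nat list \<Rightarrow> 'a::zero)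
    \<Rightarrow> nat list \<times> nat list \<Rightarrow> nat list \<times> nat list \<Rightarrow> 'a" where
  "Theta' n r s psi x y =
     (if x \<in> idx2 n r s \<and> y \<in> idx2 n r s then psi (fst x) (snd x) (fst y) (snd y) else 0)"

end

theory Submission
  imports Defs
begin

definition Cm :: "'a::comm_ring_1 \<Rightarrow> ((nat\<times>nat) list \<Rightarrow> 'a) \<Rightarrow> nat list \<Rightarrow> nat set \<Rightarrow> 'a" where
 "Cm q h a J = (\<Sum>\<sigma>\<in>permutations_of_set J. (-q)^ninv \<sigma> * h (zip a \<sigma>))"

definition good :: "'a::comm_ring_1 \<Rightarrow> 'a \<Rightarrow> nat \<Rightarrow> ((nat\<times>nat) list \<Rightarrow> 'a) \<Rightarrow> nat \<Rightarrow> bool" where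
 "good q qi n h k \<longleftrightarrow> (\<forall>u v i j c d. set u \<subseteq> gens n \<and> set v \<subseteq> gens n \<and> length u + 2 + length v = k
   \<and> i\<in>{1..n} \<and> j\<in>{1..n} \<and> c\<in>{1..n} \<and> d\<in>{1..n} \<longrightarrow>
   (i<j \<longrightarrow> h(u@(i,c)#(j,c)#v) = q*h(u@(j,c)#(i,c)#v)) \<and>
   (i<j \<longrightarrow> h(u@(c,i)#(c,j)#v) = q*h(u@(c,j)#(c,i)#v)) \<and>
   (i<c \<and> j>d \<longrightarrow> h(u@(i,j)#(c,d)#v) = h(u@(c,d)#(i,j)#v)) \<and>
   (i<c \<and> j<d \<longrightarrow> h(u@(i,j)#(c,d)#v) = h(u@(c,d)#(i,j)#v) + (q-qi)*h(u@(i,d)#(c,j)#v)))"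

lemma goodD:
  assumes "good q qi n h k" "set u \<subseteq> gens n" "set v \<subseteq> gens n" "length u + 2 + length v = k"
    "i\<in>{1..n}" "j\<in>{1..n}" "c\<in>{1..n}" "d\<in>{1..n}"
  shows "i<j \<Longrightarrow> h(u@(i,c)#(j,c)#v) = q*h(u@(j,c)#(i,c)#v)"
    and "i<j \<Longrightarrow> h(u@(c,i)#(c,j)#v) = q*h(u@(c,j)#(c,i)#v)"
    and "i<c \<Longrightarrow> j>d \<Longrightarrow> h(u@(i,j)#(c,d)#v) = h(u@(c,d)#(i,j)#v)"
    and "i<c \<Longrightarrow> j<d \<Longrightarrow> h(u@(i,j)#(c,d)#v) = h(u@(c,d)#(i,j)#v) + (q-qi)*h(u@(i,d)#(c,j)#v)"
  using assms unfolding good_def by blast+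

lemma good_prefix:
  assumes "good q qi n h (length p + k)" "set p \<subseteq> gens n"
  shows "good q qi n (\<lambda>v. h (p @ v)) k"
  unfolding good_def
proof (intro allI impI)
  fix u v i j c d assume H: "set u \<subseteq> gens n \<and> set v \<subseteq> gens n \<and> length u + 2 + length v = k
   \<and> i\<in>{1..n} \<and> j\<in>{1..n} \<and> c\<in>{1..n} \<and> d\<in>{1..n}"
  have H2: "set (p@u) \<subseteq> gens n" "length (p@u) + 2 + length v = length p + k" using H assms(2) by auto
  show "(i<j \<longrightarrow> h(p@u@(i,c)#(j,c)#v) = q*h(p@u@(j,c)#(i,c)#v)) \<and>
   (i<j \<longrightarrow> h(p@u@(c,i)#(c,j)#v) = q*h(p@u@(c,j)#(c,i)#v)) \<and>
   (i<c \<and> j>d \<longrightarrow> h(p@u@(i,j)#(c,d)#v) = h(p@u@(c,d)#(i,j)#v)) \<and>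
   (i<c \<and> j<d \<longrightarrow> h(p@u@(i,j)#(c,d)#v) = h(p@u@(c,d)#(i,j)#v) + (q-qi)*h(p@u@(i,d)#(c,j)#v))"
    using goodD[OF assms(1) H2(1) _ H2(2), of i j c d] H by auto
qed

lemma good_suffix:
  assumes "good q qi n h (k + length t)" "set t \<subseteq> gens n"
  shows "good q qi n (\<lambda>v. h (v @ t)) k"
  unfolding good_def
proof (intro allI impI)
  fix u v i j c d assume H: "set u \<subseteq> gens n \<and> set v \<subseteq> gens n \<and> length u + 2 + length v = k
   \<and> i\<in>{1..n} \<and> j\<in>{1..n} \<and> c\<in>{1..n} \<and> d\<in>{1..n}"
  have H2: "set (v@t) \<subseteq> gens n" "length u + 2 + length (v@t) = k + length t" using H assms(2) by auto
  show "(i<j \<longrightarrow> h((u@(i,c)#(j,c)#v)@t) = q*h((u@(j,c)#(i,c)#v)@t)) \<and>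
   (i<j \<longrightarrow> h((u@(c,i)#(c,j)#v)@t) = q*h((u@(c,j)#(c,i)#v)@t)) \<and>
   (i<c \<and> j>d \<longrightarrow> h((u@(i,j)#(c,d)#v)@t) = h((u@(c,d)#(i,j)#v)@t)) \<and>
   (i<c \<and> j<d \<longrightarrow> h((u@(i,j)#(c,d)#v)@t) = h((u@(c,d)#(i,j)#v)@t) + (q-qi)*h((u@(i,d)#(c,j)#v)@t))"
    using goodD[where u=u and i=i and j=j and c=c and d=d, OF assms(1) _ H2(1) H2(2)] H by auto
qed

lemma set_map_swap_gens: "set u \<subseteq> gens n \<Longrightarrow> set (map prod.swap u) \<subseteq> gens n"
  by (auto simp: gens_def)

lemma good_swap:
  assumes "good q qi n h k"
  shows "good q qi n (\<lambda>v. h (map prod.swap v)) k"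
  unfolding good_def
proof (intro allI impI)
  fix u v i j c d assume H: "set u \<subseteq> gens n \<and> set v \<subseteq> gens n \<and> length u + 2 + length v = k
   \<and> i\<in>{1..n} \<and> j\<in>{1..n} \<and> c\<in>{1..n} \<and> d\<in>{1..n}"
  let ?u = "map prod.swap u" and ?v = "map prod.swap v"
  have S: "set ?u \<subseteq> gens n" "set ?v \<subseteq> gens n" "length ?u + 2 + length ?v = k"
    using H set_map_swap_gens by auto
  note G = goodD[OF assms S]
  have "i<c \<Longrightarrow> j<d \<Longrightarrow> h(?u@(d,i)#(j,c)#?v) = h(?u@(j,c)#(d,i)#?v)"
    using G(3)[of j c d i] H by auto
  then show "(i<j \<longrightarrow> h(map prod.swap (u@(i,c)#(j,c)#v)) = q*h(map prod.swap (u@(j,c)#(i,c)#v))) \<and>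
   (i<j \<longrightarrow> h(map prod.swap (u@(c,i)#(c,j)#v)) = q*h(map prod.swap (u@(c,j)#(c,i)#v))) \<and>
   (i<c \<and> j>d \<longrightarrow> h(map prod.swap (u@(i,j)#(c,d)#v)) = h(map prod.swap (u@(c,d)#(i,j)#v))) \<and>
   (i<c \<and> j<d \<longrightarrow> h(map prod.swap (u@(i,j)#(c,d)#v)) = h(map prod.swap (u@(c,d)#(i,j)#v)) + (q-qi)*h(map prod.swap (u@(i,d)#(c,j)#v)))"
    using G(2)[of i j c] G(1)[of i j c] G(3)[of d c j i] G(4)[of j i d c] H by auto
qed

lemma Aq_dual_good:
  assumes "Aq_dual q qi n m f"
  shows "good q qi n f m"
  unfolding good_def
proof (intro allI impI)
  fix u v i j c d assume H: "set u \<subseteq> gens n \<and> set v \<subseteq> gens n \<and> length u + 2 + length v = m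
   \<and> i\<in>{1..n} \<and> j\<in>{1..n} \<and> c\<in>{1..n} \<and> d\<in>{1..n}"
  have E: "ev f (cmul (cmul [(1, u)] \<rho>) [(1, v)]) = 0" if "\<rho> \<in> Aq_rels q qi n" for \<rho>
    using assms H that unfolding Aq_dual_def by blast
  have ev2: "ev f (cmul (cmul [(1, u)] [(1,[x,y]),(a,[y,x])]) [(1, v)]) = f (u@x#y#v) + a * f(u@y#x#v)" for x y a
    by (simp add: ev_def cmul_def)
  have ev3: "ev f (cmul (cmul [(1, u)] [(1,[x,y]),(a,[y,x]),(b,[z,w])]) [(1, v)]) = f (u@x#y#v) + a * f(u@y#x#v) + b * f(u@z#w#v)" for x y z w a b
    by (simp add: ev_def cmul_def add.assoc)
  show "(i<j \<longrightarrow> f(u@(i,c)#(j,c)#v) = q*f(u@(j,c)#(i,c)#v)) \<and>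
   (i<j \<longrightarrow> f(u@(c,i)#(c,j)#v) = q*f(u@(c,j)#(c,i)#v)) \<and>
   (i<c \<and> j>d \<longrightarrow> f(u@(i,j)#(c,d)#v) = f(u@(c,d)#(i,j)#v)) \<and>
   (i<c \<and> j<d \<longrightarrow> f(u@(i,j)#(c,d)#v) = f(u@(c,d)#(i,j)#v) + (q-qi)*f(u@(i,d)#(c,j)#v))"
  proof (intro conjI impI)
    assume "i<j"
    then have "[(1, [(i,c),(j,c)]), (-q, [(j,c),(i,c)])] \<in> Aq_rels q qi n"
      using H unfolding Aq_rels_def by blast
    from E[OF this] show "f(u@(i,c)#(j,c)#v) = q*f(u@(j,c)#(i,c)#v)" unfolding ev2
      by (simp add: algebra_simps eq_neg_iff_add_eq_0[symmetric])
  next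
    assume "i<j"
    then have "[(1, [(c,i),(c,j)]), (-q, [(c,j),(c,i)])] \<in> Aq_rels q qi n"
      using H unfolding Aq_rels_def by blast
    from E[OF this] show "f(u@(c,i)#(c,j)#v) = q*f(u@(c,j)#(c,i)#v)" unfolding ev2
      by (simp add: algebra_simps eq_neg_iff_add_eq_0[symmetric])
  next
    assume "i<c \<and> j>d"
    then have "[(1, [(i,j),(c,d)]), (-1, [(c,d),(i,j)])] \<in> Aq_rels q qi n"
      using H unfolding Aq_rels_def by blast
    from E[OF this] show "f(u@(i,j)#(c,d)#v) = f(u@(c,d)#(i,j)#v)" unfolding ev2
      by (simp add: algebra_simps eq_neg_iff_add_eq_0[symmetric])
  next
    assume "i<c \<and> j<d"
    then have "[(1, [(i,j),(c,d)]), (-1, [(c,d),(i,j)]), (-(q - qi), [(i,d),(c,j)])] \<in> Aq_rels q qi n"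
      using H unfolding Aq_rels_def by blast
    from E[OF this] show "f(u@(i,j)#(c,d)#v) = f(u@(c,d)#(i,j)#v) + (q-qi)*f(u@(i,d)#(c,j)#v)" unfolding ev3
      by (simp add: algebra_simps eq_neg_iff_add_eq_0[symmetric])
  qed
qed

lemma ninv_Cons: "ninv (x#xs) = length (filter (\<lambda>y. y<x) xs) + ninv xs"
proof -
  let ?S = "{(a, b). a < b \<and> b < length (x#xs) \<and> (x#xs) ! a > (x#xs) ! b}"
  let ?T = "{(a, b). a < b \<and> b < length xs \<and> xs ! a > xs ! b}"
  let ?A = "(\<lambda>b. (0::nat, Suc b)) ` {b. b < length xs \<and> xs!b < x}"
  let ?B = "(\<lambda>(a,b). (Suc a, Suc b)) ` ?T"
  have eq: "?S = ?A \<union> ?B"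
  proof (rule set_eqI, clarify)
    fix a b
    show "((a,b) \<in> ?S) = ((a,b) \<in> ?A \<union> ?B)"
      by (cases a; cases b) (auto simp: image_iff)
  qed
  have fT: "finite ?T" by (rule finite_subset[of _ "{..<length xs} \<times> {..<length xs}"]) auto
  have "card ?S = card ?A + card ?B"
    unfolding eq by (rule card_Un_disjoint) (use fT in auto)
  moreover have "card ?A = card {b. b < length xs \<and> xs!b < x}"
    by (rule card_image) (auto simp: inj_on_def)
  moreover have "card ?B = card ?T"
    by (rule card_image) (auto simp: inj_on_def)
  ultimately show ?thesis unfolding ninv_def length_filter_conv_card by simp
qed

lemma sum_perms_expand:
  assumes "finite J" "J \<noteq> {}"
  shows "(\<Sum>\<sigma>\<in>permutations_of_set J. g \<sigma>) = (\<Sum>c\<in>J. \<Sum>\<sigma>\<in>permutations_of_set (J-{c}). g (c#\<sigma>))"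
proof -
  have "(\<Sum>\<sigma>\<in>permutations_of_set J. g \<sigma>) = (\<Sum>c\<in>J. sum g ((#) c ` permutations_of_set (J-{c})))"
    unfolding permutations_of_set_nonempty[OF assms(2)]
    by (rule sum.UNION_disjoint) (use assms(1) in auto)
  also have "\<dots> = (\<Sum>c\<in>J. \<Sum>\<sigma>\<in>permutations_of_set (J-{c}). g (c#\<sigma>))"
    by (rule sum.cong[OF refl], subst sum.reindex) (auto simp: inj_on_def)
  finally show ?thesis .
qed

lemma perm_filter_cnt:
  fixes c :: nat
  assumes "\<sigma> \<in> permutations_of_set (J-{c})"
  shows "length (filter (\<lambda>y. y<c) \<sigma>) = card {y\<in>J. y<c}"
proof -
  have "distinct \<sigma>" "set \<sigma> = J - {c}" using assms by (auto simp: permutations_of_set_def)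
  then have "length (filter (\<lambda>y. y<c) \<sigma>) = card ({y. y<c} \<inter> (J-{c}))"
    by (simp add: distinct_length_filter)
  also have "{y. y<c} \<inter> (J-{c}) = {y\<in>J. y<c}" by auto
  finally show ?thesis .
qed

lemma Cm_expand:
  assumes "finite J" "J \<noteq> {}"
  shows "Cm q h (x#a) J = (\<Sum>c\<in>J. (-q)^card {y\<in>J. y<c} * Cm q (\<lambda>v. h((x,c)#v)) a (J-{c}))"
  unfolding Cm_def sum_perms_expand[OF assms]
  by (rule sum.cong[OF refl]) (simp add: sum_distrib_left ninv_Cons perm_filter_cnt power_add mult_ac cong: sum.cong)

lemma Cm_empty: "Cm q h a {} = h []"
  by (simp add: Cm_def ninv_def)

lemma Cm_lin:
  assumes "\<And>\<sigma>. \<sigma> \<in> permutations_of_set J \<Longrightarrow> g (zip a \<sigma>) = \<alpha> * g1 (zip a \<sigma>) + \<beta> * g2 (zip a \<sigma>)"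
  shows "Cm q g a J = \<alpha> * Cm q g1 a J + \<beta> * Cm q g2 a J"
  unfolding Cm_def using assms
  by (simp add: sum_distrib_left sum.distrib[symmetric] algebra_simps cong: sum.cong)

lemma Cm_cong:
  assumes "\<And>\<sigma>. \<sigma> \<in> permutations_of_set J \<Longrightarrow> g (zip a \<sigma>) = g1 (zip a \<sigma>)"
  shows "Cm q g a J = Cm q g1 a J"
  unfolding Cm_def using assms by (simp cong: sum.cong)

definition EE :: "nat set \<Rightarrow> nat \<Rightarrow> nat \<Rightarrow> nat" where
  "EE J c d = card {z\<in>J. z<c} + card {z\<in>J-{c}. z<d}"

lemma EE_swap:
  assumes "finite J" "c \<in> J" "d \<in> J" "c < d"
  shows "EE J d c = Suc (EE J c d)"
proof -
  have 1: "{z\<in>J. z<d} = insert c {z\<in>J-{c}. z<d}" using assms by auto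
  have 2: "card {z\<in>J. z<d} = Suc (card {z\<in>J-{c}. z<d})"
    unfolding 1 by (rule card_insert_disjoint) (use assms in auto)
  have 3: "{z\<in>J-{d}. z<c} = {z\<in>J. z<c}" using assms by auto
  show ?thesis unfolding EE_def 2 3 by simp
qed

lemma Cm_expand2:
  assumes "finite J" "2 \<le> card J"
  shows "Cm q h (x#y#a) J = (\<Sum>c\<in>J. \<Sum>d\<in>J-{c}. (-q)^EE J c d * Cm q (\<lambda>v. h((x,c)#(y,d)#v)) a (J-{c,d}))"
proof -
  have ne: "J \<noteq> {}" using assms by auto
  have ne2: "J - {c} \<noteq> {}" if "c \<in> J" for c
  proof
    assume "J - {c} = {}"
    then have "J \<subseteq> {c}" by auto
    then have "card J \<le> 1" using card_mono[of "{c}" J] by auto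
    then show False using assms by auto
  qed
  show ?thesis
    unfolding Cm_expand[OF assms(1) ne]
    apply (rule sum.cong[OF refl])
    apply (subst Cm_expand)
    using assms(1) ne2 apply (auto simp: EE_def sum_distrib_left power_add mult_ac Diff_insert2[symmetric] insert_commute intro!: sum.cong)
    done
qed

lemma pair_sum_zero:
  fixes D :: "nat \<Rightarrow> nat \<Rightarrow> 'a::comm_ring_1"
  assumes "finite J" "\<And>c d. c \<in> J \<Longrightarrow> d \<in> J \<Longrightarrow> c < d \<Longrightarrow> D c d + D d c = 0"
  shows "(\<Sum>c\<in>J. \<Sum>d\<in>J-{c}. D c d) = 0"
proof -
  have "(\<Sum>c\<in>J. \<Sum>d\<in>J-{c}. D c d) = (\<Sum>c\<in>J. \<Sum>d\<in>J. (if c < d then D c d else 0) + (if d < c then D c d else 0))"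
  proof (rule sum.cong[OF refl])
    fix c assume c: "c \<in> J"
    have "(\<Sum>d\<in>J-{c}. D c d) = (\<Sum>d\<in>J. if d = c then 0 else D c d)"
      using assms(1) c by (simp add: sum.If_cases Diff_eq Int_commute)
    also have "\<dots> = (\<Sum>d\<in>J. (if c < d then D c d else 0) + (if d < c then D c d else 0))"
      by (rule sum.cong) auto
    finally show "(\<Sum>d\<in>J-{c}. D c d) = (\<Sum>d\<in>J. (if c < d then D c d else 0) + (if d < c then D c d else 0))" .
  qed
  also have "\<dots> = (\<Sum>c\<in>J. \<Sum>d\<in>J. (if c < d then D c d else 0)) + (\<Sum>c\<in>J. \<Sum>d\<in>J. (if d < c then D c d else 0))"
    by (simp add: sum.distrib)
  also have "(\<Sum>c\<in>J. \<Sum>d\<in>J. (if d < c then D c d else 0)) = (\<Sum>d\<in>J. \<Sum>c\<in>J. (if d < c then D c d else 0))"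
    by (rule sum.swap)
  also have "(\<Sum>c\<in>J. \<Sum>d\<in>J. (if c < d then D c d else 0)) + (\<Sum>d\<in>J. \<Sum>c\<in>J. (if d < c then D c d else 0))
      = (\<Sum>c\<in>J. \<Sum>d\<in>J. (if c < d then D c d + D d c else 0))"
    by (simp add: sum.distrib[symmetric] if_distrib if_distribR cong: if_cong)
  also have "\<dots> = 0" by (intro sum.neutral ballI) (simp add: assms(2))
  finally show ?thesis .
qed

lemma zip_gens: "set a \<subseteq> {1..n} \<Longrightarrow> set b \<subseteq> {1..n} \<Longrightarrow> set (zip a b) \<subseteq> gens n"
  by (auto simp: gens_def dest: set_zip_leftD set_zip_rightD)

lemma perm_facts:
  assumes "\<sigma> \<in> permutations_of_set A" "finite A"
  shows "set \<sigma> = A" "distinct \<sigma>" "length \<sigma> = card A"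
  using assms by (auto simp: permutations_of_set_def distinct_card[symmetric])

lemma card_minus2:
  assumes "finite J" "c \<in> J" "d \<in> J" "c \<noteq> d"
  shows "card (J - {c,d}) = card J - 2"
proof -
  have "card (J - {c,d}) = card J - card {c,d}" using assms by (intro card_Diff_subset) auto
  then show ?thesis using assms by simp
qed

lemma Cm_swap0:
  assumes qi: "q*qi = 1" and g: "good q qi n h k" and k: "k = length a + 2" and cJ: "card J = k"
    and J: "J \<subseteq> {1..n}" and xy: "x < y" "x \<in> {1..n}" "y \<in> {1..n}" and a: "set a \<subseteq> {1..n}"
  shows "Cm q h (y#x#a) J = -q * Cm q h (x#y#a) J"
proof -
  have fJ: "finite J" using J finite_subset by blast
  have c2: "2 \<le> card J" using k cJ by simp
  define T where "T c d = Cm q (\<lambda>v. h((x,c)#(y,d)#v)) a (J-{c,d})" for c d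
  define T' where "T' c d = Cm q (\<lambda>v. h((y,c)#(x,d)#v)) a (J-{c,d})" for c d
  define D where "D c d = (-q)^EE J c d * T' c d + q * ((-q)^EE J c d * T c d)" for c d
  have "Cm q h (y#x#a) J + q * Cm q h (x#y#a) J = (\<Sum>c\<in>J. \<Sum>d\<in>J-{c}. D c d)"
    unfolding Cm_expand2[OF fJ c2] D_def T_def T'_def
    by (simp add: sum_distrib_left sum.distrib)
  also have "\<dots> = 0"
  proof (rule pair_sum_zero[OF fJ])
    fix c d assume cd: "c \<in> J" "d \<in> J" "c < d"
    have cn: "c \<in> {1..n}" "d \<in> {1..n}" using cd J by auto
    have Jdc: "J - {d,c} = J - {c,d}" by auto
    have pw: "set (zip a \<sigma>) \<subseteq> gens n \<and> length [] + 2 + length (zip a \<sigma>) = k"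
      if "\<sigma> \<in> permutations_of_set (J-{c,d})" for \<sigma>
    proof -
      have "set \<sigma> = J - {c,d}" "length \<sigma> = card (J-{c,d})" using perm_facts[OF that] fJ by auto
      moreover have "card (J-{c,d}) = length a" using card_minus2[OF fJ cd(1,2)] cd k cJ by simp
      ultimately show ?thesis using zip_gens[OF a, of \<sigma>] J k by auto
    qed
    have R4: "T c d = 1 * T' d c + (q-qi) * T d c"
      unfolding T_def T'_def Jdc
      by (rule Cm_lin) (use goodD(4)[OF g, of "[]" _ x c y d] pw cn xy cd in auto)
    have R3: "T d c = T' c d"
      unfolding T_def T'_def Jdc
      by (rule Cm_cong) (use goodD(3)[OF g, of "[]" _ x d y c] pw cn xy cd in auto)
    have E: "EE J d c = Suc (EE J c d)" using EE_swap[OF fJ cd] .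
    have "D c d + D d c = (-q)^EE J c d * T' c d * (1 - q*qi)"
      unfolding D_def E R4 R3 by (simp add: algebra_simps)
    then show "D c d + D d c = 0" using qi by simp
  qed
  finally show ?thesis by (simp add: algebra_simps eq_neg_iff_add_eq_0)
qed

lemma Cm_zero0:
  assumes g: "good q qi n h k" and k: "k = length a + 2" and cJ: "card J = k"
    and J: "J \<subseteq> {1..n}" and x: "x \<in> {1..n}" and a: "set a \<subseteq> {1..n}"
  shows "Cm q h (x#x#a) J = 0"
proof -
  have fJ: "finite J" using J finite_subset by blast
  have c2: "2 \<le> card J" using k cJ by simp
  define T where "T c d = Cm q (\<lambda>v. h((x,c)#(x,d)#v)) a (J-{c,d})" for c d
  define D where "D c d = (-q)^EE J c d * T c d" for c d
  have "Cm q h (x#x#a) J = (\<Sum>c\<in>J. \<Sum>d\<in>J-{c}. D c d)"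
    unfolding Cm_expand2[OF fJ c2] D_def T_def by simp
  also have "\<dots> = 0"
  proof (rule pair_sum_zero[OF fJ])
    fix c d assume cd: "c \<in> J" "d \<in> J" "c < d"
    have cn: "c \<in> {1..n}" "d \<in> {1..n}" using cd J by auto
    have Jdc: "J - {d,c} = J - {c,d}" by auto
    have pw: "set (zip a \<sigma>) \<subseteq> gens n \<and> length [] + 2 + length (zip a \<sigma>) = k"
      if "\<sigma> \<in> permutations_of_set (J-{c,d})" for \<sigma>
    proof -
      have "set \<sigma> = J - {c,d}" "length \<sigma> = card (J-{c,d})" using perm_facts[OF that] fJ by auto
      moreover have "card (J-{c,d}) = length a" using card_minus2[OF fJ cd(1,2)] cd k cJ by simp
      ultimately show ?thesis using zip_gens[OF a, of \<sigma>] J k by auto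
    qed
    have R2: "T c d = q * T d c + 0 * T d c"
      unfolding T_def Jdc
      by (rule Cm_lin) (use goodD(2)[OF g, of "[]" _ c d x] pw cn x cd in auto)
    have E: "EE J d c = Suc (EE J c d)" using EE_swap[OF fJ cd] .
    show "D c d + D d c = 0"
      unfolding D_def E R2 by (simp add: algebra_simps)
  qed
  finally show ?thesis .
qed

lemma good_Cons:
  assumes "good q qi n h k" "k = Suc k'" "z \<in> {1..n}" "c \<in> {1..n}"
  shows "good q qi n (\<lambda>v. h ((z,c)#v)) k'"
  using good_prefix[of q qi n h "[(z,c)]" k'] assms by (simp add: gens_def)

lemma Cm_swap:
  assumes qi: "q*qi = 1" and g: "good q qi n h k" and k: "k = length u + length a + 2" and cJ: "card J = k"
    and J: "J \<subseteq> {1..n}" and xy: "x < y" "x \<in> {1..n}" "y \<in> {1..n}" and a: "set a \<subseteq> {1..n}"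
    and u: "set u \<subseteq> {1..n}"
  shows "Cm q h (u@y#x#a) J = -q * Cm q h (u@x#y#a) J"
  using g k cJ J u
proof (induction u arbitrary: h k J)
  case Nil
  then show ?case using Cm_swap0[OF qi _ _ _ _ xy a] by simp
next
  case (Cons z u)
  have fJ: "finite J" using Cons.prems finite_subset by blast
  have ne: "J \<noteq> {}" using Cons.prems by auto
  have IH: "Cm q (\<lambda>v. h ((z,c)#v)) (u@y#x#a) (J-{c}) = -q * Cm q (\<lambda>v. h ((z,c)#v)) (u@x#y#a) (J-{c})"
    if c: "c \<in> J" for c
  proof (rule Cons.IH)
    show "good q qi n (\<lambda>v. h ((z,c)#v)) (k-1)"
      by (rule good_Cons[OF Cons.prems(1)]) (use Cons.prems c in auto)
    show "card (J - {c}) = k - 1" using Cons.prems c fJ by simp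
  qed (use Cons.prems c in auto)
  show ?case
    using IH by (simp add: Cm_expand[OF fJ ne] sum_distrib_left mult_ac cong: sum.cong)
qed

lemma Cm_zero:
  assumes g: "good q qi n h k" and k: "k = length u + length a + 2" and cJ: "card J = k"
    and J: "J \<subseteq> {1..n}" and x: "x \<in> {1..n}" and a: "set a \<subseteq> {1..n}"
    and u: "set u \<subseteq> {1..n}"
  shows "Cm q h (u@x#x#a) J = 0"
  using g k cJ J u
proof (induction u arbitrary: h k J)
  case Nil
  then show ?case using Cm_zero0[OF _ _ _ _ x a] by simp
next
  case (Cons z u)
  have fJ: "finite J" using Cons.prems finite_subset by blast
  have ne: "J \<noteq> {}" using Cons.prems by auto
  have IH: "Cm q (\<lambda>v. h ((z,c)#v)) (u@x#x#a) (J-{c}) = 0"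
    if c: "c \<in> J" for c
  proof (rule Cons.IH)
    show "good q qi n (\<lambda>v. h ((z,c)#v)) (k-1)"
      by (rule good_Cons[OF Cons.prems(1)]) (use Cons.prems c in auto)
    show "card (J - {c}) = k - 1" using Cons.prems c fJ by simp
  qed (use Cons.prems c in auto)
  show ?case
    using IH by (simp add: Cm_expand[OF fJ ne] cong: sum.cong)
qed

lemma Cm_ins:
  assumes qi: "q*qi = 1" and g: "good q qi n h k" and k: "k = length u + Suc (length b)" and cJ: "card J = k"
    and J: "J \<subseteq> {1..n}" and x: "x \<in> {1..n}" and b: "set b \<subseteq> {1..n}" and u: "set u \<subseteq> {1..n}"
    and sb: "sorted b"
  shows "Cm q h (u @ x # b) J = (-q)^(length (filter (\<lambda>y. y<x) b)) * Cm q h (u @ insort x b) J"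
  using k b u sb
proof (induction b arbitrary: u)
  case Nil
  then show ?case by simp
next
  case (Cons b1 b)
  show ?case
  proof (cases "x \<le> b1")
    case True
    have "filter (\<lambda>y. y<x) (b1#b) = []" using Cons.prems(4) True by (auto simp: filter_empty_conv)
    then show ?thesis using True by simp
  next
    case False
    then have lt: "b1 < x" by simp
    have "Cm q h (u @ x # b1 # b) J = -q * Cm q h (u @ b1 # x # b) J"
      by (rule Cm_swap[OF qi g _ cJ J lt]) (use Cons.prems x in auto)
    also have "Cm q h (u @ b1 # x # b) J = Cm q h ((u @ [b1]) @ x # b) J" by simp
    also have "\<dots> = (-q)^(length (filter (\<lambda>y. y<x) b)) * Cm q h ((u @ [b1]) @ insort x b) J"
      by (rule Cons.IH) (use Cons.prems in auto)
    finally show ?thesis using lt by simp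
  qed
qed

lemma length_filter_sort: "length (filter P (sort xs)) = length (filter P xs)"
  by (metis mset_filter mset_sort size_mset)

lemma Cm_sort:
  assumes qi: "q*qi = 1" and g: "good q qi n h (length a)" and cJ: "card J = length a"
    and J: "J \<subseteq> {1..n}" and a: "set a \<subseteq> {1..n}"
  shows "Cm q h a J = (-q)^(ninv a) * Cm q h (sort a) J"
  using g cJ J a
proof (induction a arbitrary: h J)
  case Nil
  then show ?case by (simp add: ninv_def)
next
  case (Cons x a)
  have fJ: "finite J" using Cons.prems finite_subset by blast
  have ne: "J \<noteq> {}" using Cons.prems by auto
  have IH: "Cm q (\<lambda>v. h ((x,c)#v)) a (J-{c}) = (-q)^(ninv a) * Cm q (\<lambda>v. h ((x,c)#v)) (sort a) (J-{c})"
    if c: "c \<in> J" for c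
  proof (rule Cons.IH)
    show "good q qi n (\<lambda>v. h ((x,c)#v)) (length a)"
      by (rule good_Cons[OF Cons.prems(1)]) (use Cons.prems c in auto)
    show "card (J - {c}) = length a" using Cons.prems c fJ by simp
  qed (use Cons.prems c in auto)
  have "Cm q h (x#a) J = (-q)^(ninv a) * Cm q h (x # sort a) J"
    using IH by (simp add: Cm_expand[OF fJ ne] sum_distrib_left mult_ac cong: sum.cong)
  moreover have "Cm q h ([] @ x # sort a) J = (-q)^(length (filter (\<lambda>y. y<x) (sort a))) * Cm q h ([] @ insort x (sort a)) J"
    by (rule Cm_ins[OF qi Cons.prems(1) _ Cons.prems(2,3)]) (use Cons.prems in auto)
  ultimately show ?case by (simp add: ninv_Cons length_filter_sort power_add mult_ac)
qed

lemma sorted_nondistinct: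
  assumes "sorted xs" "\<not> distinct xs"
  shows "\<exists>u x v. xs = u @ x # x # v"
  using assms
proof (induction xs)
  case Nil then show ?case by simp
next
  case (Cons y xs)
  show ?case
  proof (cases "distinct xs")
    case True
    then have "y \<in> set xs" using Cons.prems by simp
    then obtain z zs where xs: "xs = z # zs" by (cases xs) auto
    have "y \<le> z" using Cons.prems(1) xs by simp
    moreover have "z \<le> y" using \<open>y \<in> set xs\<close> Cons.prems(1) xs by auto
    ultimately have "y = z" by simp
    then show ?thesis using xs by (intro exI[of _ "[]"]) auto
  next
    case False
    then obtain u x v where "xs = u @ x # x # v" using Cons by auto
    then show ?thesis by (intro exI[of _ "y#u"]) auto
  qed
qed

lemma Cm_nondistinct:
  assumes qi: "q*qi = 1" and g: "good q qi n h (length a)" and cJ: "card J = length a"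
    and J: "J \<subseteq> {1..n}" and a: "set a \<subseteq> {1..n}" and nd: "\<not> distinct a"
  shows "Cm q h a J = 0"
proof -
  have "\<not> distinct (sort a)" using nd by (metis distinct_sort)
  then obtain u x v where s: "sort a = u @ x # x # v" using sorted_nondistinct[of "sort a"] by auto
  have ss: "set (sort a) \<subseteq> {1..n}" using a by simp
  have ls: "length (sort a) = length a" by simp
  have "Cm q h (sort a) J = 0"
    unfolding s
    by (rule Cm_zero[OF g _ cJ J]) (use ss s ls in \<open>auto simp del: length_sort\<close>)
  then show ?thesis using Cm_sort[OF assms(1-5)] by simp
qed

lemma cnt_remove:
  fixes c :: nat
  assumes "finite J" "j \<in> J" "j < c"
  shows "card {z\<in>J. z<c} = Suc (card {z\<in>J-{j}. z<c})"
proof -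
  have 1: "{z\<in>J. z<c} = insert j {z\<in>J-{j}. z<c}" using assms by auto
  show ?thesis unfolding 1 by (rule card_insert_disjoint) (use assms in auto)
qed

lemma cnt_min:
  fixes J :: "nat set"
  assumes "finite J" "J \<noteq> {}"
  shows "card {z\<in>J. z < Min J} = 0"
  using assms by auto

lemma Cm_transpose:
  assumes "good q qi n h k" "card I = k" "card J = k" "I \<subseteq> {1..n}" "J \<subseteq> {1..n}"
  shows "Cm q h (sorted_list_of_set I) J = Cm q (\<lambda>v. h (map prod.swap v)) (sorted_list_of_set J) I"
  using assms
proof (induction k arbitrary: h I J rule: less_induct)
  case (less k)
  have fI: "finite I" and fJ: "finite J" using less.prems finite_subset by blast+
  show ?case
  proof (cases "k = 0")
    case True
    then have "I = {}" "J = {}" using less.prems fI fJ by auto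
    then show ?thesis by (simp add: Cm_empty)
  next
    case False
    have neI: "I \<noteq> {}" and neJ: "J \<noteq> {}" using less.prems False by auto
    define i1 where "i1 = Min I"
    define j1 where "j1 = Min J"
    have i1: "i1 \<in> I" "\<And>z. z \<in> I \<Longrightarrow> i1 \<le> z" using fI neI unfolding i1_def by auto
    have j1: "j1 \<in> J" "\<And>z. z \<in> J \<Longrightarrow> j1 \<le> z" using fJ neJ unfolding j1_def by auto
    have slI: "sorted_list_of_set I = i1 # sorted_list_of_set (I-{i1})"
      unfolding i1_def by (rule sorted_list_of_set_nonempty[OF fI neI])
    have slJ: "sorted_list_of_set J = j1 # sorted_list_of_set (J-{j1})"
      unfolding j1_def by (rule sorted_list_of_set_nonempty[OF fJ neJ])
    have gens1: "(a, b) \<in> gens n" if "a \<in> I" "b \<in> J" for a b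
      using that less.prems by (auto simp: gens_def)
    define X where "X c = Cm q (\<lambda>v. h((i1,c)#v)) (sorted_list_of_set (I-{i1})) (J-{c})" for c
    define Y where "Y r = Cm q (\<lambda>v. h((r,j1)#map prod.swap v)) (sorted_list_of_set (J-{j1})) (I-{r})" for r
    define Z where "Z c r = Cm q (\<lambda>v. h((i1,c)#(r,j1)#map prod.swap v)) (sorted_list_of_set (J-{j1,c})) (I-{i1,r})" for c r
    have L: "Cm q h (sorted_list_of_set I) J = (\<Sum>c\<in>J. (-q)^card {z\<in>J. z<c} * X c)"
      unfolding slI X_def by (rule Cm_expand[OF fJ neJ])
    have R: "Cm q (\<lambda>v. h (map prod.swap v)) (sorted_list_of_set J) I = (\<Sum>r\<in>I. (-q)^card {z\<in>I. z<r} * Y r)"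
      unfolding slJ Y_def by (subst Cm_expand[OF fI neI]) simp
    have XY: "X j1 = Y i1"
    proof -
      have "X j1 = Cm q (\<lambda>v. h((i1,j1)# map prod.swap v)) (sorted_list_of_set (J-{j1})) (I-{i1})"
        unfolding X_def
        by (rule less.IH[of "k-1"]) (use False less.prems i1 j1 fI fJ in \<open>auto intro!: good_Cons\<close>)
      then show ?thesis unfolding Y_def .
    qed
    have Xc: "X c = (\<Sum>r\<in>I-{i1}. (-q)^card {z\<in>I-{i1}. z<r} * Z c r)" if c: "c \<in> J-{j1}" for c
    proof -
      have jc: "j1 < c" using c j1 by force
      have "card {j1,c} \<le> card J" using c j1 fJ by (intro card_mono) auto
      then have k2: "2 \<le> k" using c less.prems(3) by auto
      have sl: "sorted_list_of_set (J-{c}) = j1 # sorted_list_of_set (J-{c}-{j1})"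
      proof -
        have m: "Min (J-{c}) = j1" using j1 c fJ by (intro Min_eqI) auto
        have ne: "J-{c} \<noteq> {}" using j1 c by auto
        show ?thesis using sorted_list_of_set_nonempty[of "J-{c}"] ne fJ unfolding m by simp
      qed
      have "card (I - {i1}) = k - 1" using less.prems(2) i1 fI by simp
      then have neI1: "I - {i1} \<noteq> {}" using k2 by (intro notI) simp
      have "X c = Cm q (\<lambda>v. h((i1,c)# map prod.swap v)) (sorted_list_of_set (J-{c})) (I-{i1})"
        unfolding X_def
        by (rule less.IH[of "k-1"]) (use False less.prems i1 j1 c fI fJ in \<open>auto intro!: good_Cons\<close>)
      also have "\<dots> = (\<Sum>r\<in>I-{i1}. (-q)^card {z\<in>I-{i1}. z<r} * Cm q (\<lambda>v. h((i1,c)#(r,j1)#map prod.swap v)) (sorted_list_of_set (J-{c}-{j1})) (I-{i1}-{r}))"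
        unfolding sl using fI neI1 by (subst Cm_expand) auto
      also have "\<dots> = (\<Sum>r\<in>I-{i1}. (-q)^card {z\<in>I-{i1}. z<r} * Z c r)"
      proof -
        have "J-{c}-{j1} = J-{j1,c}" "\<And>r. I-{i1}-{r} = I-{i1,r}" by auto
        then show ?thesis unfolding Z_def by simp
      qed
      finally show ?thesis .
    qed
    have Yr: "Y r = (\<Sum>c\<in>J-{j1}. (-q)^card {z\<in>J-{j1}. z<c} * Z c r)" if r: "r \<in> I-{i1}" for r
    proof -
      have ir: "i1 < r" using r i1 by force
      have "card {i1,r} \<le> card I" using r i1 fI by (intro card_mono) auto
      then have k2: "2 \<le> k" using r less.prems(2) by auto
      have sl: "sorted_list_of_set (I-{r}) = i1 # sorted_list_of_set (I-{r}-{i1})"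
      proof -
        have m: "Min (I-{r}) = i1" using i1 r fI by (intro Min_eqI) auto
        have ne: "I-{r} \<noteq> {}" using i1 r by auto
        show ?thesis using sorted_list_of_set_nonempty[of "I-{r}"] ne fI unfolding m by simp
      qed
      have "card (J - {j1}) = k - 1" using less.prems(3) j1 fJ by simp
      then have neJ1: "J - {j1} \<noteq> {}" using k2 by (intro notI) simp
      have "Y r = Cm q (\<lambda>v. h((r,j1)#v)) (sorted_list_of_set (I-{r})) (J-{j1})"
        unfolding Y_def
        by (rule less.IH[of "k-1", symmetric]) (use False less.prems i1 j1 r fI fJ in \<open>auto intro!: good_Cons\<close>)
      also have "\<dots> = (\<Sum>c\<in>J-{j1}. (-q)^card {z\<in>J-{j1}. z<c} * Cm q (\<lambda>v. h((r,j1)#(i1,c)#v)) (sorted_list_of_set (I-{r}-{i1})) (J-{j1}-{c}))"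
        unfolding sl using fJ neJ1 by (subst Cm_expand) auto
      also have "\<dots> = (\<Sum>c\<in>J-{j1}. (-q)^card {z\<in>J-{j1}. z<c} * Z c r)"
      proof (rule sum.cong[OF refl])
        fix c assume c: "c \<in> J-{j1}"
        have jc: "j1 < c" using c j1 by force
        have s1: "I-{r}-{i1} = I - {i1,r}" "J-{j1}-{c} = J-{j1,c}" by auto
        have cI: "card (I-{i1,r}) = k-2" using card_minus2[OF fI i1(1), of r] r less.prems by auto
        have cJ: "card (J-{j1,c}) = k-2" using card_minus2[OF fJ j1(1), of c] c less.prems by auto
        have kk: "length [(r,j1),(i1,c)] + (k-2) = k" using k2 by simp
        have gd: "good q qi n (\<lambda>v. h ([(r,j1),(i1,c)] @ v)) (k-2)"
          by (rule good_prefix) (use less.prems(1) kk r c i1 j1 gens1 in auto)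
        have "Cm q (\<lambda>v. h((r,j1)#(i1,c)#v)) (sorted_list_of_set (I-{i1,r})) (J-{j1,c})
            = Cm q (\<lambda>v. h((r,j1)#(i1,c)#map prod.swap v)) (sorted_list_of_set (J-{j1,c})) (I-{i1,r})"
          using less.IH[of "k-2", OF _ gd cI cJ] False less.prems by auto
        also have "\<dots> = Cm q (\<lambda>v. h((i1,c)#(r,j1)#map prod.swap v)) (sorted_list_of_set (J-{j1,c})) (I-{i1,r})"
        proof (rule Cm_cong)
          fix \<sigma> assume \<sigma>: "\<sigma> \<in> permutations_of_set (I-{i1,r})"
          have S1: "set \<sigma> = I-{i1,r}" "length \<sigma> = k-2" using perm_facts[OF \<sigma>] fI cI by auto
          have S2: "set (sorted_list_of_set (J-{j1,c})) \<subseteq> {1..n}" "length (sorted_list_of_set (J-{j1,c})) = k-2"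
            using fJ less.prems cJ by auto
          have V: "set (map prod.swap (zip (sorted_list_of_set (J-{j1,c})) \<sigma>)) \<subseteq> gens n"
            "length [] + 2 + length (map prod.swap (zip (sorted_list_of_set (J-{j1,c})) \<sigma>)) = k"
          proof -
            have "set (zip (sorted_list_of_set (J-{j1,c})) \<sigma>) \<subseteq> gens n"
              by (rule zip_gens) (use S1 S2 less.prems in auto)
            then show "set (map prod.swap (zip (sorted_list_of_set (J-{j1,c})) \<sigma>)) \<subseteq> gens n"
              by (rule set_map_swap_gens)
            show "length [] + 2 + length (map prod.swap (zip (sorted_list_of_set (J-{j1,c})) \<sigma>)) = k"
              using S1 S2 k2 by simp
          qed
          have "i1 \<in> {1..n}" "r \<in> {1..n}" "c \<in> {1..n}" "j1 \<in> {1..n}" using i1 j1 r c less.prems by auto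
          then show "h ((r,j1)#(i1,c)#map prod.swap (zip (sorted_list_of_set (J-{j1,c})) \<sigma>)) =
                 h ((i1,c)#(r,j1)#map prod.swap (zip (sorted_list_of_set (J-{j1,c})) \<sigma>))"
            using goodD(3)[OF less.prems(1) _ V(1) V(2), of i1 c r j1] ir jc by simp
        qed
        finally show "(-q)^card {z\<in>J-{j1}. z<c} * Cm q (\<lambda>v. h((r,j1)#(i1,c)#v)) (sorted_list_of_set (I-{r}-{i1})) (J-{j1}-{c})
           = (-q)^card {z\<in>J-{j1}. z<c} * Z c r" unfolding s1 Z_def by simp
      qed
      finally show ?thesis .
    qed
    have "(\<Sum>c\<in>J. (-q)^card {z\<in>J. z<c} * X c) = X j1 + (\<Sum>c\<in>J-{j1}. (-q)^card {z\<in>J. z<c} * X c)"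
    proof -
      have "{z\<in>J. z<j1} = {}" using j1(2) by force
      then have e: "(-q)^card {z\<in>J. z<j1} * X j1 = X j1" by (simp only: card.empty power_0 mult_1)
      show ?thesis using sum.remove[OF fJ j1(1), of "\<lambda>c. (-q)^card {z\<in>J. z<c} * X c"] by (simp only: e)
    qed
    also have "(\<Sum>c\<in>J-{j1}. (-q)^card {z\<in>J. z<c} * X c)
        = (\<Sum>c\<in>J-{j1}. \<Sum>r\<in>I-{i1}. (-q) * ((-q)^card {z\<in>J-{j1}. z<c} * ((-q)^card {z\<in>I-{i1}. z<r} * Z c r)))"
    proof (rule sum.cong[OF refl])
      fix c assume c: "c \<in> J-{j1}"
      have "card {z\<in>J. z<c} = Suc (card {z\<in>J-{j1}. z<c})" proof -
        have "j1 < c" using c j1 by force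
        then show ?thesis using cnt_remove[OF fJ j1(1)] by blast
      qed
      then show "(-q)^card {z\<in>J. z<c} * X c = (\<Sum>r\<in>I-{i1}. (-q) * ((-q)^card {z\<in>J-{j1}. z<c} * ((-q)^card {z\<in>I-{i1}. z<r} * Z c r)))"
        unfolding Xc[OF c] by (simp add: sum_distrib_left mult_ac)
    qed
    also have "\<dots> = (\<Sum>r\<in>I-{i1}. \<Sum>c\<in>J-{j1}. (-q) * ((-q)^card {z\<in>J-{j1}. z<c} * ((-q)^card {z\<in>I-{i1}. z<r} * Z c r)))"
      by (rule sum.swap)
    also have "\<dots> = (\<Sum>r\<in>I-{i1}. (-q)^card {z\<in>I. z<r} * Y r)"
    proof (rule sum.cong[OF refl])
      fix r assume r: "r \<in> I-{i1}"
      have "card {z\<in>I. z<r} = Suc (card {z\<in>I-{i1}. z<r})" proof -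
        have "i1 < r" using r i1 by force
        then show ?thesis using cnt_remove[OF fI i1(1)] by blast
      qed
      then show "(\<Sum>c\<in>J-{j1}. (-q) * ((-q)^card {z\<in>J-{j1}. z<c} * ((-q)^card {z\<in>I-{i1}. z<r} * Z c r))) = (-q)^card {z\<in>I. z<r} * Y r"
        unfolding Yr[OF r] by (simp add: sum_distrib_left mult_ac)
    qed
    also have "X j1 + (\<Sum>r\<in>I-{i1}. (-q)^card {z\<in>I. z<r} * Y r) = (\<Sum>r\<in>I. (-q)^card {z\<in>I. z<r} * Y r)"
    proof -
      have "{z\<in>I. z<i1} = {}" using i1(2) by force
      then have e: "(-q)^card {z\<in>I. z<i1} * Y i1 = X j1" by (simp only: card.empty power_0 mult_1 XY)
      show ?thesis using sum.remove[OF fI i1(1), of "\<lambda>r. (-q)^card {z\<in>I. z<r} * Y r"] by (simp only: e)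
    qed
    finally show ?thesis using L R by simp
  qed
qed

lemma set_omit: "set (omit n a) = {1..n} - {a}"
  by (auto simp: omit_def)

lemma omit_sorted: "sorted (omit n a)"
  unfolding omit_def by (rule sorted_wrt_filter) (rule sorted_upt)

lemma omit_distinct: "distinct (omit n a)"
  unfolding omit_def by simp

lemma omit_sl: "omit n a = sorted_list_of_set ({1..n} - {a})"
  using sorted_list_of_set.idem_if_sorted_distinct[OF omit_sorted omit_distinct] set_omit by metis

lemma perms_omit: "set (permutations_of_set_list (omit n a)) = permutations_of_set ({1..n} - {a})"
proof -
  have "remdups (omit n a) = omit n a" using omit_distinct by simp
  then show ?thesis using permutations_of_list[of "omit n a"] set_omit by metis
qed

lemma card_omit: "a \<in> {1..n} \<Longrightarrow> card ({1..n} - {a}) = n - 1"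
  by simp

lemma length_omit: "a \<in> {1..n} \<Longrightarrow> length (omit n a) = n - 1"
  by (simp add: omit_sl)

lemma ninv_sorted: "sorted_wrt (<) xs \<Longrightarrow> ninv xs = 0"
proof (induction xs)
  case Nil then show ?case by (simp add: ninv_def)
next
  case (Cons x xs)
  then have "filter (\<lambda>y. y<x) xs = []" by (auto simp: filter_empty_conv)
  then show ?case using Cons by (simp add: ninv_Cons)
qed

lemma sum_list_if_eq:
  assumes "distinct (map fst L)"
  shows "(\<Sum>x\<leftarrow>L. if fst x = p then g x else 0) = (case map_of L p of None \<Rightarrow> 0 | Some y \<Rightarrow> g (p, y))"
  using assms by (induction L) (auto split: option.splits simp: image_iff dest: map_of_SomeD)

lemma sum_list_map_if:
  assumes "distinct L"
  shows "(\<Sum>x\<leftarrow>L. if x = p then g x else 0) = (if p \<in> set L then g p else (0::'a::comm_monoid_add))"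
  using assms by (induction L) auto

lemma cvec_kappa1:
  "cvec (kappa1 q n a) p = (if p \<in> permutations_of_set ({1..n} - {a}) then (-q)^a * (-q)^ninv p else 0)"
proof -
  have d: "distinct (permutations_of_set_list (omit n a))"
    by (rule distinct_permutations_of_set_list) (simp add: omit_def)
  have s: "set (permutations_of_set_list (omit n a)) = permutations_of_set ({1..n} - {a})"
    by (rule perms_omit)
  have "cvec (kappa1 q n a) p = (\<Sum>x\<leftarrow>permutations_of_set_list (omit n a). if x = p then (-q)^a * (-q)^ninv x else 0)"
    unfolding cvec_def kappa1_def by (simp add: comp_def eq_commute cong: if_cong)
  also have "\<dots> = (if p \<in> permutations_of_set ({1..n} - {a}) then (-q)^a * (-q)^ninv p else 0)"
    using sum_list_map_if[OF d, of p "\<lambda>x. (-q)^a * (-q)^ninv x"] s by simp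
  finally show ?thesis .
qed

lemma kappa1_len: "a \<in> {1..n} \<Longrightarrow> x \<in> set (kappa1 q n a) \<Longrightarrow> length (snd x) = n - 1"
  using perms_omit[of n a] length_finite_permutations_of_set[of _ "{1..n}-{a}"]
  by (auto simp: kappa1_def)

lemma cvec_single: "cvec (cmul [(1,k)] c) w = (if take (length k) w = k then cvec c (drop (length k) w) else 0)"
  unfolding cvec_def cmul_def
  by (induction c) (auto simp: append_eq_conv_conj)

lemma cvec_cmul_len:
  assumes "\<And>x. x \<in> set c \<Longrightarrow> length (snd x) = L"
  shows "cvec (cmul c d) w = cvec c (take L w) * cvec d (drop L w)"
  using assms
proof (induction c)
  case Nil then show ?case by (simp add: cvec_def cmul_def)
next
  case (Cons x c)
  have IH: "cvec (cmul c d) w = cvec c (take L w) * cvec d (drop L w)" using Cons by auto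
  have lx: "length (snd x) = L" using Cons by auto
  have "cvec (cmul (x#c) d) w = (\<Sum>y\<leftarrow>d. if snd x @ snd y = w then fst x * fst y else 0) + cvec (cmul c d) w"
    by (simp add: cvec_def cmul_def comp_def cong: if_cong)
  also have "(\<Sum>y\<leftarrow>d. if snd x @ snd y = w then fst x * fst y else 0)
      = (if snd x = take L w then fst x else 0) * cvec d (drop L w)"
    unfolding cvec_def using lx
    by (induction d) (auto simp: append_eq_conv_conj algebra_simps)
  finally show ?case using IH by (simp add: cvec_def algebra_simps)
qed

lemma cvec_cone: "cvec cone w = (if w = [] then 1 else 0)"
  by (auto simp: cvec_def cone_def)

definition KK :: "'a::comm_ring_1 \<Rightarrow> nat \<Rightarrow> nat list \<Rightarrow> nat list \<Rightarrow> 'a" where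
  "KK q n l w = cvec (foldr cmul (map (kappa1 q n) l) cone) w"

lemma KK_Nil: "KK q n [] w = (if w = [] then 1 else 0)"
  by (simp add: KK_def cvec_cone)

lemma KK_Cons: "a \<in> {1..n} \<Longrightarrow> KK q n (a#l) w = cvec (kappa1 q n a) (take (n-1) w) * KK q n l (drop (n-1) w)"
  unfolding KK_def by (simp add: cvec_cmul_len[where L="n-1"] kappa1_len)

lemma kappa_mat_KK: "kappa_mat q n w (k,l) = (if take (length k) w = k then KK q n l (drop (length k) w) else 0)"
  by (simp add: kappa_mat_def KK_def cvec_single)

lemma ev_single: "ev h (cmul [(1,u)] c) = ev (\<lambda>v. h (u@v)) c"
  by (induction c) (auto simp: ev_def cmul_def)

lemma ev_cmul: "ev h (cmul c d) = (\<Sum>x\<leftarrow>c. fst x * ev (\<lambda>v. h (snd x @ v)) d)"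
proof (induction c)
  case Nil then show ?case by (simp add: ev_def cmul_def)
next
  case (Cons x c)
  have "ev h (cmul (x#c) d) = (\<Sum>y\<leftarrow>d. fst x * fst y * h (snd x @ snd y)) + ev h (cmul c d)"
    by (simp add: ev_def cmul_def comp_def)
  also have "(\<Sum>y\<leftarrow>d. fst x * fst y * h (snd x @ snd y)) = fst x * ev (\<lambda>v. h (snd x @ v)) d"
    unfolding ev_def by (induction d) (auto simp: algebra_simps)
  finally show ?case using Cons by simp
qed

lemma ev_cone: "ev h cone = h []"
  by (simp add: ev_def cone_def)

lemma ev_cscale: "ev h (cscale a c) = a * ev h c"
  by (induction c) (auto simp: ev_def cscale_def algebra_simps)

lemma map_swap_zip: "map prod.swap (zip x y) = zip y x"
  by (induction x arbitrary: y) (auto simp: zip_Cons1 split: list.splits)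

lemma ev_iota_star:
  "ev h (iota_star q qi n a b) = (-q)^b * (-qi)^a * Cm q (\<lambda>v. h (map prod.swap v)) (omit n b) ({1..n} - {a})"
proof -
  have d: "distinct (permutations_of_set_list (omit n a))"
    by (rule distinct_permutations_of_set_list) (simp add: omit_def)
  have s: "set (permutations_of_set_list (omit n a)) = permutations_of_set ({1..n} - {a})"
    by (rule perms_omit)
  have "ev h (qminor q (omit n a) (omit n b)) = (\<Sum>p\<leftarrow>permutations_of_set_list (omit n a). (-q)^ninv p * h (zip p (omit n b)))"
    by (simp add: ev_def qminor_def comp_def)
  also have "\<dots> = (\<Sum>p\<in>permutations_of_set ({1..n} - {a}). (-q)^ninv p * h (zip p (omit n b)))"
    using sum_list_distinct_conv_sum_set[OF d] s by simp
  also have "\<dots> = Cm q (\<lambda>v. h (map prod.swap v)) (omit n b) ({1..n} - {a})"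
    by (simp add: Cm_def map_swap_zip)
  finally show ?thesis by (simp add: iota_star_def ev_cscale)
qed

lemma finite_idx: "finite (idx n m)"
proof -
  have "idx n m = {xs. set xs \<subseteq> {1..n} \<and> length xs = m}" by (auto simp: idx_def)
  then show ?thesis using finite_lists_length_eq[of "{1..n}" m] by simp
qed

lemma perms_in_idx: "a \<in> {1..n} \<Longrightarrow> permutations_of_set ({1..n} - {a}) \<subseteq> idx n (n-1)"
  using length_finite_permutations_of_set[of _ "{1..n}-{a}"]
  by (auto simp: idx_def permutations_of_set_def)

lemma block:
  assumes qi: "q*qi = 1" and g: "good q qi n h (n-1)" and z: "z \<in> idx n (n-1)" and b: "b \<in> {1..n}"
  shows "(\<Sum>a\<in>{1..n}. cvec (kappa1 q n a) z * ev h (iota_star q qi n a b))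
       = (\<Sum>w\<in>idx n (n-1). h (zip z w) * cvec (kappa1 q n b) w)"
proof -
  define Ob where "Ob = {1..n} - {b}"
  have lz: "length z = n-1" and sz: "set z \<subseteq> {1..n}" using z by (auto simp: idx_def)
  have cOb: "card Ob = n-1" and Ob: "Ob \<subseteq> {1..n}" using b by (auto simp: Ob_def)
  have "(\<Sum>w\<in>idx n (n-1). h (zip z w) * cvec (kappa1 q n b) w)
      = (\<Sum>w\<in>idx n (n-1). if w \<in> permutations_of_set Ob then (-q)^b * ((-q)^ninv w * h (zip z w)) else 0)"
    by (rule sum.cong[OF refl]) (simp add: cvec_kappa1 Ob_def mult_ac)
  also have "\<dots> = (\<Sum>w\<in>idx n (n-1) \<inter> permutations_of_set Ob. (-q)^b * ((-q)^ninv w * h (zip z w)))"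
    by (rule sum.inter_restrict[symmetric]) (rule finite_idx)
  also have "idx n (n-1) \<inter> permutations_of_set Ob = permutations_of_set Ob"
    using perms_in_idx[OF b] by (auto simp: Ob_def)
  finally have RHS: "(\<Sum>w\<in>idx n (n-1). h (zip z w) * cvec (kappa1 q n b) w) = (-q)^b * Cm q h z Ob"
    by (simp add: Cm_def sum_distrib_left)
  have gz: "good q qi n h (length z)" using g lz by simp
  show ?thesis
  proof (cases "distinct z")
    case False
    have "cvec (kappa1 q n a) z = 0" for a
      using False by (auto simp: cvec_kappa1 permutations_of_set_def)
    moreover have "Cm q h z Ob = 0"
      by (rule Cm_nondistinct[OF qi gz _ Ob sz False]) (simp add: cOb lz)
    ultimately show ?thesis using RHS by simp
  next
    case True
    have cz: "card (set z) = n - 1" using True lz distinct_card by metis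
    have "set z \<noteq> {1..n}" using cz b by auto
    then obtain a0 where a0: "a0 \<in> {1..n}" "a0 \<notin> set z" using sz by blast
    have sz0: "set z = {1..n} - {a0}"
      by (rule card_subset_eq) (use sz a0 cz in auto)
    have zP: "z \<in> permutations_of_set ({1..n} - {a0})" using sz0 True by (simp add: permutations_of_set_def)
    have other: "cvec (kappa1 q n a) z = 0" if "a \<in> {1..n} - {a0}" for a
    proof -
      have "a \<in> set z" using that sz0 by auto
      then have "z \<notin> permutations_of_set ({1..n} - {a})" by (auto simp: permutations_of_set_def)
      then show ?thesis by (simp add: cvec_kappa1)
    qed
    have "(\<Sum>a\<in>{1..n}. cvec (kappa1 q n a) z * ev h (iota_star q qi n a b))
        = cvec (kappa1 q n a0) z * ev h (iota_star q qi n a0 b)"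
      using sum.remove[of "{1..n}" a0 "\<lambda>a. cvec (kappa1 q n a) z * ev h (iota_star q qi n a b)"] a0 other
      by simp
    also have "\<dots> = ((-q)^a0 * (-qi)^a0) * ((-q)^ninv z * ((-q)^b * Cm q (\<lambda>v. h (map prod.swap v)) (omit n b) ({1..n} - {a0})))"
      using zP by (simp add: cvec_kappa1 ev_iota_star mult_ac)
    also have "(-q)^a0 * (-qi)^a0 = 1"
      by (simp add: power_mult_distrib[symmetric] qi)
    also have "Cm q (\<lambda>v. h (map prod.swap v)) (omit n b) ({1..n} - {a0}) = Cm q h (sort z) Ob"
    proof -
      have "sort z = sorted_list_of_set ({1..n} - {a0})"
        using sorted_list_of_set_sort_remdups[of z] True sz0 by (simp add: distinct_remdups_id)
      moreover have "Cm q h (sorted_list_of_set ({1..n} - {a0})) Ob = Cm q (\<lambda>v. h (map prod.swap v)) (sorted_list_of_set Ob) ({1..n} - {a0})"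
        by (rule Cm_transpose[OF g]) (use a0 cOb Ob in auto)
      ultimately show ?thesis by (simp add: Ob_def omit_sl)
    qed
    finally have L: "(\<Sum>a\<in>{1..n}. cvec (kappa1 q n a) z * ev h (iota_star q qi n a b)) = (-q)^b * ((-q)^ninv z * Cm q h (sort z) Ob)"
      by (simp add: mult_ac)
    have "(-q)^ninv z * Cm q h (sort z) Ob = Cm q h z Ob"
      by (rule Cm_sort[OF qi gz _ Ob sz, symmetric]) (simp add: cOb lz)
    then show ?thesis using RHS L by simp
  qed
qed

lemma sum_idx_Suc: "(\<Sum>j\<in>idx n (Suc s). F j) = (\<Sum>a\<in>{1..n}. \<Sum>j\<in>idx n s. F (a#j))"
proof -
  have e: "idx n (Suc s) = (\<lambda>(a,j). a#j) ` ({1..n} \<times> idx n s)"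
  proof (rule set_eqI)
    fix x show "x \<in> idx n (Suc s) \<longleftrightarrow> x \<in> (\<lambda>(a,j). a#j) ` ({1..n} \<times> idx n s)"
      by (cases x) (auto simp: idx_def image_iff)
  qed
  have i: "inj_on (\<lambda>(a,j). a#j) ({1..n} \<times> idx n s)" by (auto simp: inj_on_def)
  show ?thesis unfolding e sum.reindex[OF i]
    by (simp add: sum.cartesian_product split_def)
qed

lemma sum_idx_add: "(\<Sum>w\<in>idx n (A+B). F w) = (\<Sum>w1\<in>idx n A. \<Sum>w2\<in>idx n B. F (w1@w2))"
proof -
  have e: "idx n (A+B) = (\<lambda>(u,v). u@v) ` (idx n A \<times> idx n B)"
  proof (rule set_eqI)
    fix x show "x \<in> idx n (A+B) \<longleftrightarrow> x \<in> (\<lambda>(u,v). u@v) ` (idx n A \<times> idx n B)"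
    proof
      assume x: "x \<in> idx n (A+B)"
      then have "x = take A x @ drop A x" "take A x \<in> idx n A" "drop A x \<in> idx n B"
        by (auto simp: idx_def dest: in_set_takeD in_set_dropD)
      then show "x \<in> (\<lambda>(u,v). u@v) ` (idx n A \<times> idx n B)"
        by (intro image_eqI[of _ _ "(take A x, drop A x)"]) auto
    qed (force simp: idx_def)
  qed
  have i: "inj_on (\<lambda>(u,v). u@v) (idx n A \<times> idx n B)" by (auto simp: inj_on_def idx_def)
  show ?thesis unfolding e sum.reindex[OF i]
    by (simp add: sum.cartesian_product split_def)
qed

lemma sum_sum_list_aux:
  fixes c :: "'a::comm_ring_1"
  shows "(\<Sum>j\<in>S. c * (K j * (\<Sum>x\<leftarrow>L. fst x * E x j))) = c * (\<Sum>x\<leftarrow>L. fst x * (\<Sum>j\<in>S. K j * E x j))"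
  by (induction L) (auto simp: sum.distrib algebra_simps sum_distrib_left)

lemma sum_list_sum_H1:
  fixes F :: "_ \<Rightarrow> 'a::comm_ring_1"
  shows "(\<Sum>x\<leftarrow>L. fst x * (\<Sum>w\<in>W. F w * G x w)) = (\<Sum>w\<in>W. F w * (\<Sum>x\<leftarrow>L. fst x * G x w))"
  by (induction L) (auto simp: sum.distrib algebra_simps sum_distrib_left)

lemma sum_list_sum_H2:
  fixes F :: "_ \<Rightarrow> 'a::comm_ring_1"
  shows "(\<Sum>a\<in>A. c a * (\<Sum>x\<leftarrow>L a. fst x * (\<Sum>w\<in>W. F w * G x w))) = (\<Sum>w\<in>W. F w * (\<Sum>a\<in>A. c a * (\<Sum>x\<leftarrow>L a. fst x * G x w)))"
  unfolding sum_list_sum_H1 by (simp add: sum_distrib_left sum.swap[of _ A] mult_ac)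

lemma sum_sum_list_swap: "(\<Sum>j\<in>S. \<Sum>x\<leftarrow>L. F x j) = (\<Sum>x\<leftarrow>L. \<Sum>j\<in>S. F x j)"
  by (induction L) (auto simp: sum.distrib)

lemma iota_star_elems:
  assumes "a \<in> {1..n}" "b \<in> {1..n}" "x \<in> set (iota_star q qi n a b)"
  shows "length (snd x) = n-1" "set (snd x) \<subseteq> gens n"
proof -
  obtain p where p: "p \<in> permutations_of_set ({1..n} - {a})" "snd x = zip p (omit n b)"
    using assms(3) perms_omit[of n a] by (auto simp: iota_star_def cscale_def qminor_def)
  have "length p = n - 1" "set p \<subseteq> {1..n}" using perm_facts[OF p(1)] assms by auto
  then show "length (snd x) = n-1" "set (snd x) \<subseteq> gens n"
    using p(2) length_omit[OF assms(2)] zip_gens[of p n "omit n b"] by (auto simp: set_omit)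
qed

lemma BL:
  assumes qi: "q*qi = 1"
  shows "good q qi n h ((n-1)*length l) \<Longrightarrow> set l \<subseteq> {1..n} \<Longrightarrow> z \<in> idx n ((n-1)*length l) \<Longrightarrow>
   (\<Sum>j\<in>idx n (length l). KK q n j z * ev h (foldr cmul (map2 (iota_star q qi n) j l) cone))
   = (\<Sum>w\<in>idx n ((n-1)*length l). h (zip z w) * KK q n l w)"
proof (induction l arbitrary: h z)
  case Nil
  have "idx n 0 = {[]}" by (auto simp: idx_def)
  moreover have "z = []" using Nil by (auto simp: idx_def)
  ultimately show ?case by (simp add: KK_Nil ev_cone)
next
  case (Cons b l)
  define N1 where "N1 = n - 1"
  define M where "M = N1 * length l"
  have b: "b \<in> {1..n}" and sl: "set l \<subseteq> {1..n}" using Cons.prems by auto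
  have lz: "length z = N1 + M" and sz: "set z \<subseteq> {1..n}" using Cons.prems(3) by (auto simp: idx_def N1_def M_def)
  define z1 where "z1 = take N1 z"
  define z2 where "z2 = drop N1 z"
  have z1: "z1 \<in> idx n N1" and z2: "z2 \<in> idx n M" using lz sz
    by (auto simp: idx_def z1_def z2_def dest: in_set_takeD in_set_dropD)
  have gh: "good q qi n h (N1 + M)" using Cons.prems(1) by (simp add: N1_def M_def)
  have IH: "(\<Sum>j\<in>idx n (length l). KK q n j z2 * ev (\<lambda>v. h (snd x @ v)) (foldr cmul (map2 (iota_star q qi n) j l) cone))
      = (\<Sum>w\<in>idx n M. h (snd x @ zip z2 w) * KK q n l w)"
    if x: "a \<in> {1..n}" "x \<in> set (iota_star q qi n a b)" for a x
  proof -
    have "good q qi n (\<lambda>v. h (snd x @ v)) M"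
      by (rule good_prefix) (use gh iota_star_elems[OF x(1) b x(2)] N1_def in auto)
    then show ?thesis using Cons.IH[of "\<lambda>v. h (snd x @ v)" z2] sl z2 by (simp add: M_def N1_def)
  qed
  have "(\<Sum>j\<in>idx n (length (b#l)). KK q n j z * ev h (foldr cmul (map2 (iota_star q qi n) j (b#l)) cone))
      = (\<Sum>a\<in>{1..n}. \<Sum>j\<in>idx n (length l). KK q n (a#j) z * ev h (foldr cmul (map2 (iota_star q qi n) (a#j) (b#l)) cone))"
    by (simp add: sum_idx_Suc)
  also have "\<dots> = (\<Sum>a\<in>{1..n}. cvec (kappa1 q n a) z1 * (\<Sum>x\<leftarrow>iota_star q qi n a b. fst x *
        (\<Sum>j\<in>idx n (length l). KK q n j z2 * ev (\<lambda>v. h (snd x @ v)) (foldr cmul (map2 (iota_star q qi n) j l) cone))))"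
    by (rule sum.cong[OF refl])
      (simp add: KK_Cons ev_cmul z1_def z2_def N1_def sum_sum_list_aux mult.assoc)
  also have "\<dots> = (\<Sum>a\<in>{1..n}. cvec (kappa1 q n a) z1 * (\<Sum>x\<leftarrow>iota_star q qi n a b. fst x *
        (\<Sum>w\<in>idx n M. h (snd x @ zip z2 w) * KK q n l w)))"
  proof (rule sum.cong[OF refl])
    fix a assume a: "a \<in> {1..n}"
    have "(\<Sum>x\<leftarrow>iota_star q qi n a b. fst x *
        (\<Sum>j\<in>idx n (length l). KK q n j z2 * ev (\<lambda>v. h (snd x @ v)) (foldr cmul (map2 (iota_star q qi n) j l) cone)))
       = (\<Sum>x\<leftarrow>iota_star q qi n a b. fst x * (\<Sum>w\<in>idx n M. h (snd x @ zip z2 w) * KK q n l w))"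
      by (rule arg_cong[where f=sum_list], rule map_cong[OF refl]) (simp add: IH[OF a])
    then show "cvec (kappa1 q n a) z1 * (\<Sum>x\<leftarrow>iota_star q qi n a b. fst x *
        (\<Sum>j\<in>idx n (length l). KK q n j z2 * ev (\<lambda>v. h (snd x @ v)) (foldr cmul (map2 (iota_star q qi n) j l) cone)))
       = cvec (kappa1 q n a) z1 * (\<Sum>x\<leftarrow>iota_star q qi n a b. fst x * (\<Sum>w\<in>idx n M. h (snd x @ zip z2 w) * KK q n l w))"
      by simp
  qed
  also have "\<dots> = (\<Sum>w\<in>idx n M. KK q n l w * (\<Sum>a\<in>{1..n}. cvec (kappa1 q n a) z1 * ev (\<lambda>v. h (v @ zip z2 w)) (iota_star q qi n a b)))"
    using sum_list_sum_H2[where c="\<lambda>a. cvec (kappa1 q n a) z1" and L="\<lambda>a. iota_star q qi n a b" and F="\<lambda>w. KK q n l w" and G="\<lambda>x w. h (snd x @ zip z2 w)"]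
    by (simp add: ev_def mult_ac)
  also have "\<dots> = (\<Sum>w\<in>idx n M. KK q n l w * (\<Sum>w1\<in>idx n N1. h (zip z1 w1 @ zip z2 w) * cvec (kappa1 q n b) w1))"
  proof (rule sum.cong[OF refl])
    fix w assume w: "w \<in> idx n M"
    have "good q qi n (\<lambda>v. h (v @ zip z2 w)) N1"
      by (rule good_suffix) (use gh z2 w zip_gens[of z2 n w] in \<open>auto simp: idx_def\<close>)
    then show "KK q n l w * (\<Sum>a\<in>{1..n}. cvec (kappa1 q n a) z1 * ev (\<lambda>v. h (v @ zip z2 w)) (iota_star q qi n a b))
        = KK q n l w * (\<Sum>w1\<in>idx n N1. h (zip z1 w1 @ zip z2 w) * cvec (kappa1 q n b) w1)"
      using block[OF qi _ _ b, of "\<lambda>v. h (v @ zip z2 w)" z1] z1 by (simp add: N1_def)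
  qed
  also have "\<dots> = (\<Sum>w1\<in>idx n N1. \<Sum>w\<in>idx n M. h (zip z (w1 @ w)) * KK q n (b#l) (w1 @ w))"
  proof -
    have e: "zip z (w1 @ w) = zip z1 w1 @ zip z2 w" "KK q n (b#l) (w1 @ w) = cvec (kappa1 q n b) w1 * KK q n l w"
      if "w1 \<in> idx n N1" for w1 w
    proof -
      have lw1: "length w1 = N1" using that by (simp add: idx_def)
      have zz: "z = z1 @ z2" by (simp add: z1_def z2_def)
      have l1: "length z1 = length w1" using lz lw1 by (simp add: z1_def)
      show "zip z (w1 @ w) = zip z1 w1 @ zip z2 w"
        using zip_append[OF l1, of z2 w] zz by simp
      show "KK q n (b#l) (w1 @ w) = cvec (kappa1 q n b) w1 * KK q n l w"
        using lw1 by (simp add: KK_Cons[OF b] N1_def)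
    qed
    show ?thesis using e
      by (simp add: sum_distrib_left sum.swap[of _ "idx n M"] mult_ac cong: sum.cong)
  qed
  also have "\<dots> = (\<Sum>w\<in>idx n ((n-1) * length (b#l)). h (zip z w) * KK q n (b#l) w)"
    using sum_idx_add[where n=n and A=N1 and B=M and F="\<lambda>w. h (zip z w) * KK q n (b#l) w"] by (simp add: N1_def M_def)
  finally show ?case .
qed

lemma omit_in_perms_iff:
  assumes "a \<in> {1..n}" "a' \<in> {1..n}"
  shows "omit n a \<in> permutations_of_set ({1..n} - {a'}) \<longleftrightarrow> a = a'"
proof -
  have "({1..n} - {a} = {1..n} - {a'}) \<longleftrightarrow> a = a'" using assms by blast
  then show ?thesis using omit_distinct[of n a] by (auto simp: permutations_of_set_def set_omit)
qed

lemma ninv_omit: "ninv (omit n a) = 0"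
  by (rule ninv_sorted) (simp add: strict_sorted_iff omit_sorted omit_distinct)

lemma KK_concat:
  assumes "set j \<subseteq> {1..n}" "set j' \<subseteq> {1..n}" "length j' = length j"
  shows "KK q n j' (concat (map (omit n) j)) = (if j' = j then (-q)^(sum_list j) else 0)"
  using assms
proof (induction j arbitrary: j')
  case Nil then show ?case by (simp add: KK_Nil)
next
  case (Cons a j)
  obtain a' j'' where j': "j' = a' # j''" using Cons.prems(3) by (cases j') auto
  have a: "a \<in> {1..n}" "a' \<in> {1..n}" using Cons.prems j' by auto
  have lo: "length (omit n a) = n - 1" using length_omit[OF a(1)] .
  have "KK q n j' (concat (map (omit n) (a#j))) = cvec (kappa1 q n a') (omit n a) * KK q n j'' (concat (map (omit n) j))"
    using lo by (simp add: j' KK_Cons[OF a(2)])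
  also have "\<dots> = (if a' = a then (-q)^a else 0) * (if j'' = j then (-q)^(sum_list j) else 0)"
    using Cons.IH[of j''] Cons.prems j' omit_in_perms_iff[OF a] by (auto simp: cvec_kappa1 ninv_omit)
  finally show ?case using j' by (auto simp: power_add)
qed

theorem lemma5p2:
  fixes q qi :: "'a::comm_ring_1" and n r s m :: nat
    and f :: "(nat \<times> nat) list \<Rightarrow> 'a"
  assumes "q * qi = 1" and "n \<ge> 1" and "m = r + (n - 1) * s"
    and "Aq_dual q qi n m f"
  shows "pi_map q n r s (Theta f) =
         Theta' n r s (\<lambda>i j k l. ev f (iota_mon q qi n i j k l))"
proof -
  note qi = assms(1)
  have gf: "good q qi n f m" using Aq_dual_good[OF assms(4)] .
  define N0 where "N0 = Theta' n r s (\<lambda>i j k l. ev f (iota_mon q qi n i j k l))"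
  define P where "P = (\<lambda>N. (\<forall>x y. N x y \<noteq> 0 \<longrightarrow> x \<in> idx2 n r s \<and> y \<in> idx2 n r s) \<and>
     (\<forall>w\<in>idx n (r + (n - 1) * s). \<forall>y\<in>idx2 n r s.
        (\<Sum>x\<in>idx2 n r s. kappa_mat q n w x * N x y) =
        (\<Sum>w'\<in>idx n (r + (n - 1) * s). Theta f w w' * kappa_mat q n w' y)))"
  have eqn: "(\<Sum>x\<in>idx2 n r s. kappa_mat q n w x * N0 x y) =
        (\<Sum>w'\<in>idx n (r + (n - 1) * s). Theta f w w' * kappa_mat q n w' y)"
    if w: "w \<in> idx n (r + (n - 1) * s)" and y: "y \<in> idx2 n r s" for w y
  proof -
    obtain k l where yk: "y = (k,l)" "k \<in> idx n r" "l \<in> idx n s" using y by (auto simp: idx2_def)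
    have lw: "length w = r + (n-1)*s" and sw: "set w \<subseteq> {1..n}" using w by (auto simp: idx_def)
    define i0 where "i0 = take r w"
    define z where "z = drop r w"
    have i0: "i0 \<in> idx n r" using lw sw by (auto simp: idx_def i0_def dest: in_set_takeD)
    have z: "z \<in> idx n ((n-1) * length l)" using lw sw yk by (auto simp: idx_def z_def dest: in_set_dropD)
    have lk: "length k = r" "set k \<subseteq> {1..n}" and ll: "length l = s" "set l \<subseteq> {1..n}" using yk by (auto simp: idx_def)
    define g where "g = (\<lambda>v. f (zip i0 k @ v))"
    have gg: "good q qi n g ((n-1) * length l)"
      unfolding g_def
      by (rule good_prefix) (use gf assms(3) lk ll i0 zip_gens[of i0 n k] in \<open>auto simp: idx_def\<close>)
    have "(\<Sum>x\<in>idx2 n r s. kappa_mat q n w x * N0 x y)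
        = (\<Sum>i\<in>idx n r. \<Sum>j\<in>idx n s. (if i = i0 then KK q n j z * ev f (iota_mon q qi n i j k l) else 0))"
    proof -
      have "(\<Sum>x\<in>idx2 n r s. kappa_mat q n w x * N0 x y) = (\<Sum>i\<in>idx n r. \<Sum>j\<in>idx n s. kappa_mat q n w (i,j) * N0 (i,j) y)"
        unfolding idx2_def by (simp add: sum.cartesian_product split_def)
      also have "\<dots> = (\<Sum>i\<in>idx n r. \<Sum>j\<in>idx n s. (if i = i0 then KK q n j z * ev f (iota_mon q qi n i j k l) else 0))"
      proof (intro sum.cong refl)
        fix i j assume i: "i \<in> idx n r" and j: "j \<in> idx n s"
        have li: "length i = r" using i by (simp add: idx_def)
        have "N0 (i,j) y = ev f (iota_mon q qi n i j k l)"
          using i j yk by (simp add: N0_def Theta'_def idx2_def)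
        moreover have "kappa_mat q n w (i,j) = (if i = i0 then KK q n j z else 0)"
          using li lw by (auto simp: kappa_mat_KK i0_def z_def)
        ultimately show "kappa_mat q n w (i,j) * N0 (i,j) y = (if i = i0 then KK q n j z * ev f (iota_mon q qi n i j k l) else 0)"
          by simp
      qed
      finally show ?thesis .
    qed
    also have "\<dots> = (\<Sum>i\<in>idx n r. if i = i0 then (\<Sum>j\<in>idx n s. KK q n j z * ev f (iota_mon q qi n i j k l)) else 0)"
      by (rule sum.cong) auto
    also have "\<dots> = (\<Sum>j\<in>idx n s. KK q n j z * ev f (iota_mon q qi n i0 j k l))"
      using i0 by (simp add: finite_idx)
    also have "\<dots> = (\<Sum>j\<in>idx n (length l). KK q n j z * ev g (foldr cmul (map2 (iota_star q qi n) j l) cone))"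
      by (simp add: iota_mon_def ev_single g_def ll)
    also have "\<dots> = (\<Sum>w\<in>idx n ((n-1)*length l). g (zip z w) * KK q n l w)"
      by (rule BL[OF qi gg ll(2) z])
    also have "\<dots> = (\<Sum>w1\<in>idx n r. \<Sum>w2\<in>idx n ((n-1)*s). (if w1 = k then f (zip w (w1 @ w2)) * KK q n l w2 else 0))"
    proof -
      have "zip w (k @ w2) = zip i0 k @ zip z w2" for w2
      proof -
        have "length i0 = length k" using lw lk by (simp add: i0_def)
        then show ?thesis using zip_append[of i0 k z w2] by (simp add: i0_def z_def)
      qed
      then have e: "(\<Sum>w\<in>idx n ((n-1)*length l). g (zip z w) * KK q n l w) = (\<Sum>w2\<in>idx n ((n-1)*s). f (zip w (k @ w2)) * KK q n l w2)"
        by (simp add: g_def ll)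
      have "(\<Sum>w1\<in>idx n r. \<Sum>w2\<in>idx n ((n-1)*s). (if w1 = k then f (zip w (w1 @ w2)) * KK q n l w2 else 0))
          = (\<Sum>w1\<in>idx n r. if w1 = k then (\<Sum>w2\<in>idx n ((n-1)*s). f (zip w (w1 @ w2)) * KK q n l w2) else 0)"
        by (rule sum.cong) auto
      also have "\<dots> = (\<Sum>w2\<in>idx n ((n-1)*s). f (zip w (k @ w2)) * KK q n l w2)"
        using yk by (simp add: finite_idx)
      finally show ?thesis using e by simp
    qed
    also have "\<dots> = (\<Sum>w'\<in>idx n (r + (n - 1) * s). Theta f w w' * kappa_mat q n w' y)"
    proof -
      have "Theta f w (w1 @ w2) * kappa_mat q n (w1 @ w2) y = (if w1 = k then f (zip w (w1 @ w2)) * KK q n l w2 else 0)"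
        if "w1 \<in> idx n r" for w1 w2
        using that lk by (auto simp: Theta_def kappa_mat_KK yk idx_def)
      then show ?thesis
        using sum_idx_add[where n=n and A=r and B="(n-1)*s" and F="\<lambda>w'. Theta f w w' * kappa_mat q n w' y"]
        by simp
    qed
    finally show ?thesis .
  qed
  have PN0: "P N0"
    unfolding P_def
  proof (rule conjI)
    show "\<forall>x y. N0 x y \<noteq> 0 \<longrightarrow> x \<in> idx2 n r s \<and> y \<in> idx2 n r s"
      by (auto simp: N0_def Theta'_def split: if_splits)
    show "\<forall>w\<in>idx n (r + (n - 1) * s). \<forall>y\<in>idx2 n r s.
        (\<Sum>x\<in>idx2 n r s. kappa_mat q n w x * N0 x y) =
        (\<Sum>w'\<in>idx n (r + (n - 1) * s). Theta f w w' * kappa_mat q n w' y)"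
      using eqn by blast
  qed
  have uniq: "N = N0" if PN: "P N" for N
  proof (intro ext)
    fix x y
    show "N x y = N0 x y"
    proof (cases "x \<in> idx2 n r s \<and> y \<in> idx2 n r s")
      case False
      then have "N x y = 0" using PN unfolding P_def by blast
      moreover have "N0 x y = 0" unfolding N0_def Theta'_def by (rule if_not_P[OF False])
      ultimately show ?thesis by simp
    next
      case True
      obtain i j where x: "x = (i,j)" "i \<in> idx n r" "j \<in> idx n s" using True by (auto simp: idx2_def)
      define wx where "wx = i @ concat (map (omit n) j)"
      have lc: "length (concat (map (omit n) j)) = (n-1) * s"
      proof -
        have "\<forall>a\<in>set j. length (omit n a) = n-1" using x length_omit by (auto simp: idx_def)
        then have "length (concat (map (omit n) j)) = length j * (n-1)"
          by (induction j) auto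
        then show ?thesis using x by (simp add: idx_def)
      qed
      have wx: "wx \<in> idx n (r + (n-1)*s)"
        using x lc by (auto simp: idx_def wx_def set_omit)
      have km: "kappa_mat q n wx x' = (if x' = x then (-q)^(sum_list j) else 0)" if x'in: "x' \<in> idx2 n r s" for x'
      proof -
        obtain i' j' where x': "x' = (i',j')" "i' \<in> idx n r" "j' \<in> idx n s" using x'in by (auto simp: idx2_def)
        have li: "length i' = length i" using x x' by (simp add: idx_def)
        have "kappa_mat q n wx x' = (if i' = i then KK q n j' (concat (map (omit n) j)) else 0)"
          using li by (simp add: x' kappa_mat_KK wx_def)
        also have "\<dots> = (if x' = x then (-q)^(sum_list j) else 0)"
          using KK_concat[of j n j' q] x x' by (auto simp: idx_def)
        finally show ?thesis .
      qed
      have sumN: "(\<Sum>x'\<in>idx2 n r s. kappa_mat q n wx x' * M x' y) = (-q)^(sum_list j) * M x y" for M :: "nat list \<times> nat list \<Rightarrow> nat list \<times> nat list \<Rightarrow> 'a"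
      proof -
        have "(\<Sum>x'\<in>idx2 n r s. kappa_mat q n wx x' * M x' y) = (\<Sum>x'\<in>idx2 n r s. if x' = x then (-q)^(sum_list j) * M x' y else 0)"
          by (rule sum.cong) (auto simp: km)
        also have "\<dots> = (-q)^(sum_list j) * M x y"
          using True by (simp add: idx2_def finite_idx)
        finally show ?thesis .
      qed
      have "(-q)^(sum_list j) * N x y = (-q)^(sum_list j) * N0 x y"
        using PN PN0 wx True unfolding P_def sumN[symmetric] by simp
      then have "((-qi)^(sum_list j) * (-q)^(sum_list j)) * N x y = ((-qi)^(sum_list j) * (-q)^(sum_list j)) * N0 x y"
        by (simp add: mult.assoc)
      moreover have "(-qi)^(sum_list j) * (-q)^(sum_list j) = 1"
        by (simp add: power_mult_distrib[symmetric] qi mult.commute)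
      ultimately show ?thesis by simp
    qed
  qed
  have "pi_map q n r s (Theta f) = (THE N. P N)"
    unfolding pi_map_def P_def by simp
  also have "\<dots> = N0"
    by (rule the_equality[where P=P, OF PN0 uniq])
  finally show ?thesis unfolding N0_def .
qed

end
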